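(* Let $\mathcal{I}$ be a meager ideal on $\mathbf{N}$. Then the set $$\{x \in (0,1] : \Gamma_b^k(x,\mathcal{I}) = \Delta_b^k \text{ for all integers } b\ge 2,\ k\ge 1\}$$ is comeager in $(0,1]$.
   Context: For an integer $b\ge 2$ and $x\in(0,1]$, write $x=\sum_{n\ge 1} d_{b,n}(x)/b^n$ for the unique nonterminating $b$-adic expansion, with digits $d_{b,n}(x)\in\{0,\dots,b-1\}$. Let $S_b^k$ be the set of all strings $\bm{s}=s_1\cdots s_k$ of length $k$ with $s_j\in\{0,\dots,b-1\}$. For $\bm{s}\in S_b^k$ and $n\ge1$ put $\pi_{b,\bm{s},n}(x)=\frac{1}{n}\#\{i\in\{1,\dots,n\}: d_{b,i+j-1}(x)=s_j \text{ for all } j=1,\dots,k\}$, and let $\bm{\pi}^k_{b,n}(x)=(\pi_{b,\bm{s},n}(x):\bm{s}\in S_b^k)\in\mathbf{R}^{b^k}$. Let $\Delta_b^k=\{(p_{\bm{s}})_{\bm{s}\in S_b^k}\in\mathbf{R}^{b^k}: \sum_{\bm{s}}p_{\bm{s}}=1,\ p_{\bm{s}}\ge0 \text{ for all } \bm{s},\ \text{and } \sum_{s_0}p_{s_0\bm{s}}=\sum_{s_k}p_{\bm{s}s_k} \text{ for all } \bm{s}\in S_b^{k-1}\}$, where $s_0\bm{s}$, $\bm{s}s_k$ denote concatenated strings and $s_0,s_k$ range over $\{0,\dots,b-1\}$. An ideal on $\mathbf{N}$ is a family $\mathcal{I}\subseteq\mathcal{P}(\mathbf{N})$ closed under finite unions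 and subsets, containing all finite sets, and different from $\mathcal{P}(\mathbf{N})$. $\mathcal{P}(\mathbf{N})$ carries the Cantor-space topology (identifying subsets with $\{0,1\}^{\mathbf{N}}$); $\mathcal{I}$ is meager if it is a meager subset of this space. For a sequence $(x_n)$ in $\mathbf{R}^d$, a point $\eta$ is an $\mathcal{I}$-cluster point if $\{n\in\mathbf{N}: x_n\in U\}\notin\mathcal{I}$ for every open neighborhood $U$ of $\eta$. $\Gamma_b^k(x,\mathcal{I})$ denotes the set of $\mathcal{I}$-cluster points of the sequence $(\bm{\pi}^k_{b,n}(x):n\ge1)$. *)

theory Defs
  imports "HOL-Analysis.Analysis"
begin

definition nowhere_dense_in :: "'a topology \<Rightarrow> 'a set \<Rightarrow> bool" where
  "nowhere_dense_in X A \<longleftrightarrow> A \<subseteq> topspace X \<and> X interior_of (X closure_of A) = {}"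

definition meager_in :: "'a topology \<Rightarrow> 'a set \<Rightarrow> bool" where
  "meager_in X A \<longleftrightarrow> (\<exists>F. countable F \<and> (\<forall>N\<in>F. nowhere_dense_in X N) \<and> A \<subseteq> \<Union>F)"

definition comeager_in :: "'a topology \<Rightarrow> 'a set \<Rightarrow> bool" where
  "comeager_in X A \<longleftrightarrow> meager_in X (topspace X - A)"

definition is_ideal :: "nat set set \<Rightarrow> bool" where
  "is_ideal I \<longleftrightarrow> (\<forall>A\<in>I. \<forall>B\<in>I. A \<union> B \<in> I) \<and> (\<forall>A\<in>I. \<forall>B. B \<subseteq> A \<longrightarrow> B \<in> I)
     \<and> (\<forall>A. finite A \<longrightarrow> A \<in> I) \<and> I \<noteq> UNIV"

(* P(N) identified with the Cantor space {0,1}^N = nat => bool (product of discrete bool) *)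
definition meager_ideal :: "nat set set \<Rightarrow> bool" where
  "meager_ideal I \<longleftrightarrow> meager_in (euclidean :: (nat \<Rightarrow> bool) topology) ((\<lambda>A n. n \<in> A) ` I)"

(* nonterminating b-adic digits; digit b x n is d_{b,n}(x) for n >= 1 *)
definition digits :: "nat \<Rightarrow> real \<Rightarrow> nat \<Rightarrow> nat" where
  "digits b x = (THE d. (\<forall>n. d n < b) \<and> d 0 = 0
       \<and> x = (\<Sum>n. real (d (Suc n)) / real b ^ Suc n)
       \<and> (\<forall>m. \<exists>n>m. d n \<noteq> 0))"

(* S_b^k, strings represented as lists; s!j is s_{j+1} *)
definition strings :: "nat \<Rightarrow> nat \<Rightarrow> nat list set" where
  "strings b k = {s. length s = k \<and> set s \<subseteq> {..<b}}"

definition freq :: "nat \<Rightarrow> nat list \<Rightarrow> nat \<Rightarrow> real \<Rightarrow> real" where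
  "freq b s n x = real (card {i \<in> {1..n}. \<forall>j<length s. digits b x (i + j) = s ! j}) / real n"

(* the vector pi^k_{b,n}(x) in R^{S_b^k}, extended by 0 outside S_b^k *)
definition freq_vec :: "nat \<Rightarrow> nat \<Rightarrow> nat \<Rightarrow> real \<Rightarrow> (nat list \<Rightarrow> real)" where
  "freq_vec b k n x = (\<lambda>s. if s \<in> strings b k then freq b s n x else 0)"

definition Delta :: "nat \<Rightarrow> nat \<Rightarrow> (nat list \<Rightarrow> real) set" where
  "Delta b k = {p. (\<forall>s. s \<notin> strings b k \<longrightarrow> p s = 0)
      \<and> (\<Sum>s\<in>strings b k. p s) = 1
      \<and> (\<forall>s\<in>strings b k. p s \<ge> 0)
      \<and> (\<forall>s\<in>strings b (k - 1). (\<Sum>a<b. p (a # s)) = (\<Sum>a<b. p (s @ [a])))}"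

(* I-cluster points of (freq_vec b k n x)_{n>=1}; topology on nat list => real is the
   product topology, which on the functions vanishing off the finite set S_b^k is that of R^(b^k) *)
definition Gamma :: "nat \<Rightarrow> nat \<Rightarrow> real \<Rightarrow> nat set set \<Rightarrow> (nat list \<Rightarrow> real) set" where
  "Gamma b k x I = {\<eta>. \<forall>U. open U \<and> \<eta> \<in> U \<longrightarrow> {n. n \<ge> 1 \<and> freq_vec b k n x \<in> U} \<notin> I}"

end

theory Submission
  imports Defs
begin

lemma nowhere_dense_D:
  assumes "nowhere_dense_in X A" "openin X V" "V \<noteq> {}"
  shows "\<exists>V'. openin X V' \<and> V' \<noteq> {} \<and> V' \<subseteq> V \<and> V' \<inter> A = {}"
proof -
  have sub: "A \<subseteq> topspace X" and int: "X interior_of (X closure_of A) = {}"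
    using assms(1) by (auto simp: nowhere_dense_in_def)
  define V' where "V' = V - X closure_of A"
  have o: "openin X V'" unfolding V'_def using assms(2) by (simp add: openin_diff)
  have "V' \<noteq> {}"
  proof
    assume "V' = {}"
    then have "V \<subseteq> X closure_of A" by (auto simp: V'_def)
    then have "V \<subseteq> X interior_of (X closure_of A)" using assms(2) by (rule interior_of_maximal)
    then show False using int assms(3) by auto
  qed
  moreover have "V' \<inter> A = {}"
  proof -
    have "A \<subseteq> X closure_of A" using sub by (rule closure_of_subset)
    then show ?thesis unfolding V'_def by blast
  qed
  moreover have "V' \<subseteq> V" unfolding V'_def by blast
  ultimately show ?thesis using o by blast
qed

lemma nowhere_dense_I:
  assumes "A \<subseteq> topspace X"
    and "\<And>V. openin X V \<Longrightarrow> V \<noteq> {} \<Longrightarrow> \<exists>V'. openin X V' \<and> V' \<noteq> {} \<and> V' \<subseteq> V \<and> V' \<inter> A = {}"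
  shows "nowhere_dense_in X A"
proof -
  have "X interior_of (X closure_of A) = {}"
  proof (rule ccontr)
    assume ne: "X interior_of (X closure_of A) \<noteq> {}"
    have oi: "openin X (X interior_of (X closure_of A))" by (rule openin_interior_of)
    obtain V' where V': "openin X V'" "V' \<noteq> {}" "V' \<subseteq> X interior_of (X closure_of A)" "V' \<inter> A = {}"
      using assms(2)[OF oi ne] by blast
    then obtain y where y: "y \<in> V'" by auto
    have "X interior_of (X closure_of A) \<subseteq> X closure_of A" by (rule interior_of_subset)
    then have "y \<in> X closure_of A" using V'(3) y by blast
    then have "\<forall>T. y \<in> T \<and> openin X T \<longrightarrow> (\<exists>z. z \<in> A \<and> z \<in> T)" by (simp add: in_closure_of)
    then obtain z where "z \<in> A" "z \<in> V'" using V'(1) y by blast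
    then show False using V'(4) by blast
  qed
  then show ?thesis using assms(1) by (simp add: nowhere_dense_in_def)
qed

lemma meager_in_UN:
  assumes "countable K" "\<And>i. i \<in> K \<Longrightarrow> meager_in X (A i)"
  shows "meager_in X (\<Union>i\<in>K. A i)"
proof -
  define P where "P i F \<longleftrightarrow> countable F \<and> (\<forall>N\<in>F. nowhere_dense_in X N) \<and> A i \<subseteq> \<Union>F" for i F
  have ex: "\<exists>F. P i F" if "i \<in> K" for i using assms(2)[OF that] unfolding meager_in_def P_def .
  define F where "F i = (SOME F. P i F)" for i
  have F: "P i (F i)" if "i \<in> K" for i unfolding F_def by (rule someI_ex[OF ex[OF that]])
  have c: "countable (\<Union>i\<in>K. F i)"
  proof (rule countable_UN[OF assms(1)])
    fix i assume "i \<in> K" then show "countable (F i)" using F[of i] by (simp add: P_def)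
  qed
  have n: "\<forall>N\<in>\<Union>i\<in>K. F i. nowhere_dense_in X N"
  proof
    fix N assume "N \<in> (\<Union>i\<in>K. F i)"
    then obtain i where "i \<in> K" "N \<in> F i" by blast
    then show "nowhere_dense_in X N" using F[of i] by (simp add: P_def)
  qed
  have s: "(\<Union>i\<in>K. A i) \<subseteq> \<Union>(\<Union>i\<in>K. F i)"
  proof
    fix x assume "x \<in> (\<Union>i\<in>K. A i)"
    then obtain i where i: "i \<in> K" "x \<in> A i" by blast
    then have "A i \<subseteq> \<Union>(F i)" using F[of i] by (simp add: P_def)
    then obtain N where "N \<in> F i" "x \<in> N" using i(2) by blast
    then show "x \<in> \<Union>(\<Union>i\<in>K. F i)" using i(1) by blast
  qed
  show ?thesis unfolding meager_in_def using c n s by blast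
qed

lemma meager_in_subset: "meager_in X B \<Longrightarrow> A \<subseteq> B \<Longrightarrow> meager_in X A"
  unfolding meager_in_def by (meson order_trans)

lemma open_fun_box:
  fixes U :: "('a \<Rightarrow> real) set"
  assumes "open U" "\<eta> \<in> U"
  shows "\<exists>D \<delta>. finite D \<and> \<delta> > 0 \<and> (\<forall>p. (\<forall>s\<in>D. \<bar>p s - \<eta> s\<bar> < \<delta>) \<longrightarrow> p \<in> U)"
proof -
  have "openin (product_topology (\<lambda>i. euclidean) UNIV) U" using assms(1)
    by (simp add: euclidean_product_topology)
  from product_topology_open_contains_basis[OF this assms(2)]
  obtain X where X: "\<eta> \<in> (\<Pi>\<^sub>E i\<in>UNIV. X i)" "\<And>i. open (X i)" "finite {i. X i \<noteq> UNIV}"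
     "(\<Pi>\<^sub>E i\<in>UNIV. X i) \<subseteq> U" by auto
  define D where "D = {i. X i \<noteq> UNIV}"
  have "\<forall>i. \<exists>e>0. ball (\<eta> i) e \<subseteq> X i"
  proof
    fix i
    have "\<eta> i \<in> X i" using X(1) by auto
    then show "\<exists>e>0. ball (\<eta> i) e \<subseteq> X i" using X(2)[of i] open_contains_ball by blast
  qed
  then obtain e where e: "\<And>i. e i > 0" "\<And>i. ball (\<eta> i) (e i) \<subseteq> X i" by metis
  define \<delta> where "\<delta> = Min (insert 1 (e ` D))"
  have fD: "finite D" using X(3) by (simp add: D_def)
  have dpos: "\<delta> > 0" unfolding \<delta>_def using fD e(1) by (subst Min_gr_iff) auto
  have dle: "\<And>i. i \<in> D \<Longrightarrow> \<delta> \<le> e i" unfolding \<delta>_def using fD by auto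
  have "p \<in> U" if p: "\<forall>s\<in>D. \<bar>p s - \<eta> s\<bar> < \<delta>" for p
  proof -
    have "p i \<in> X i" for i
    proof (cases "i \<in> D")
      case True
      then have "dist (\<eta> i) (p i) < e i" using p dle[OF True] by (auto simp: dist_real_def)
      then show ?thesis using e(2)[of i] by auto
    next
      case False then show ?thesis by (auto simp: D_def)
    qed
    then show ?thesis using X(4) by auto
  qed
  then show ?thesis using fD dpos by blast
qed

lemma open_cantor_cyl:
  fixes U :: "(nat \<Rightarrow> bool) set"
  assumes "open U" "f \<in> U"
  shows "\<exists>M. \<forall>g. (\<forall>i<M. g i = f i) \<longrightarrow> g \<in> U"
proof -
  have "openin (product_topology (\<lambda>i. euclidean) UNIV) U" using assms(1)
    by (simp add: euclidean_product_topology)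
  from product_topology_open_contains_basis[OF this assms(2)]
  obtain X where X: "f \<in> (\<Pi>\<^sub>E i\<in>UNIV. X i)" "finite {i. X i \<noteq> UNIV}"
     "(\<Pi>\<^sub>E i\<in>UNIV. X i) \<subseteq> U" by auto
  define M where "M = Suc (Max (insert 0 {i. X i \<noteq> UNIV}))"
  have "g \<in> U" if g: "\<forall>i<M. g i = f i" for g
  proof -
    have "g i \<in> X i" for i
    proof (cases "X i = UNIV")
      case False
      then have "i \<in> insert 0 {i. X i \<noteq> UNIV}" by simp
      then have "i \<le> Max (insert 0 {i. X i \<noteq> UNIV})" using X(2) by (intro Max_ge) auto
      then have "i < M" unfolding M_def by linarith
      then have "g i = f i" using g by blast
      moreover have "f i \<in> X i" using X(1) by (simp add: PiE_iff)
      ultimately show ?thesis by simp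
    qed auto
    then show ?thesis using X(3) by auto
  qed
  then show ?thesis by blast
qed

lemma open_cantor_cyl_set: "open {g :: nat \<Rightarrow> bool. \<forall>i<M. g i = f i}"
proof -
  have "{g :: nat \<Rightarrow> bool. \<forall>i<M. g i = f i} = (\<Inter>i\<in>{..<M}. (\<lambda>g. g i) -` {f i})" by auto
  moreover have "open ((\<lambda>g::nat\<Rightarrow>bool. g i) -` {f i})" for i
    by (rule open_vimage) (auto simp: open_discrete)
  ultimately show ?thesis by (auto intro!: open_INT)
qed

definition Kd :: "nat \<Rightarrow> real \<Rightarrow> nat \<Rightarrow> int" where
  "Kd b x n = \<lceil>x * real b ^ n\<rceil> - 1"

definition Dd :: "nat \<Rightarrow> real \<Rightarrow> nat \<Rightarrow> nat" where
  "Dd b x n = (if n = 0 then 0 else nat (Kd b x n - int b * Kd b x (n - 1)))"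

lemma Kd_bounds:
  "real_of_int (Kd b x n) < x * real b ^ n" "x * real b ^ n \<le> real_of_int (Kd b x n) + 1"
  unfolding Kd_def by linarith+

lemma Kd_0: "0 < x \<Longrightarrow> x \<le> 1 \<Longrightarrow> Kd b x 0 = 0"
  unfolding Kd_def by (simp add: ceiling_eq_iff)

lemma Kd_step:
  assumes "b \<ge> 2"
  shows "0 \<le> Kd b x (Suc n) - int b * Kd b x n \<and> Kd b x (Suc n) - int b * Kd b x n \<le> int b - 1"
proof -
  have bp: "real b > 0" using assms by simp
  have a1: "real_of_int (Kd b x n) < x * real b ^ n" "x * real b ^ n \<le> real_of_int (Kd b x n) + 1"
    by (rule Kd_bounds)+
  have a2: "real_of_int (Kd b x (Suc n)) < x * real b ^ Suc n" "x * real b ^ Suc n \<le> real_of_int (Kd b x (Suc n)) + 1"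
    by (rule Kd_bounds)+
  have e: "x * real b ^ Suc n = real b * (x * real b ^ n)" by simp
  have "real b * real_of_int (Kd b x n) < real b * (x * real b ^ n)" using a1(1) bp by simp
  then have l: "real b * real_of_int (Kd b x n) < real_of_int (Kd b x (Suc n)) + 1" using a2(2) e by linarith
  have "real b * (x * real b ^ n) \<le> real b * (real_of_int (Kd b x n) + 1)" using a1(2) bp by simp
  then have u: "real_of_int (Kd b x (Suc n)) < real b * real_of_int (Kd b x n) + real b" using a2(1) e
    by (simp add: algebra_simps)
  have "real_of_int (int b * Kd b x n) < real_of_int (Kd b x (Suc n) + 1)" using l by simp
  then have l': "int b * Kd b x n < Kd b x (Suc n) + 1" by (subst (asm) of_int_less_iff)
  have "real_of_int (Kd b x (Suc n)) < real_of_int (int b * Kd b x n + int b)" using u by simp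
  then have u': "Kd b x (Suc n) < int b * Kd b x n + int b" by (subst (asm) of_int_less_iff)
  show ?thesis using l' u' by linarith
qed

lemma Dd_lt: "b \<ge> 2 \<Longrightarrow> Dd b x n < b"
  using Kd_step[of b x "n - 1"] by (cases n) (auto simp: Dd_def)

lemma Kd_Suc: "b \<ge> 2 \<Longrightarrow> Kd b x (Suc n) = int b * Kd b x n + int (Dd b x (Suc n))"
  using Kd_step[of b x n] by (simp add: Dd_def)

lemma Dd_partial:
  assumes "b \<ge> 2" "0 < x" "x \<le> 1"
  shows "(\<Sum>i<n. real (Dd b x (Suc i)) / real b ^ Suc i) = real_of_int (Kd b x n) / real b ^ n"
proof (induction n)
  case 0 then show ?case using Kd_0[OF assms(2,3)] by simp
next
  case (Suc n)
  have bp: "real b > 0" using assms by simp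
  have "(\<Sum>i<Suc n. real (Dd b x (Suc i)) / real b ^ Suc i)
     = real_of_int (Kd b x n) / real b ^ n + real (Dd b x (Suc n)) / real b ^ Suc n" using Suc by simp
  also have "\<dots> = (real b * real_of_int (Kd b x n) + real (Dd b x (Suc n))) / real b ^ Suc n"
    using bp by (simp add: field_simps)
  also have "\<dots> = real_of_int (Kd b x (Suc n)) / real b ^ Suc n"
    using Kd_Suc[OF assms(1), of x n] by simp
  finally show ?case .
qed

lemma Dd_sums:
  assumes "b \<ge> 2" "0 < x" "x \<le> 1"
  shows "(\<lambda>n. real (Dd b x (Suc n)) / real b ^ Suc n) sums x"
proof -
  have bp: "real b > 1" using assms by simp
  have lo: "x - (1 / real b) ^ n \<le> real_of_int (Kd b x n) / real b ^ n" for n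
  proof -
    have "x * real b ^ n \<le> real_of_int (Kd b x n) + 1" by (rule Kd_bounds)
    then have "x \<le> (real_of_int (Kd b x n) + 1) / real b ^ n" using bp by (simp add: field_simps)
    then show ?thesis by (simp add: power_divide add_divide_distrib)
  qed
  have hi: "real_of_int (Kd b x n) / real b ^ n \<le> x" for n
  proof -
    have "real_of_int (Kd b x n) < x * real b ^ n" by (rule Kd_bounds)
    then show ?thesis using bp by (simp add: field_simps)
  qed
  have t0: "(\<lambda>n. (1 / real b) ^ n) \<longlonglongrightarrow> 0" using bp by (intro LIMSEQ_power_zero) auto
  have t1: "(\<lambda>n. x - (1 / real b) ^ n) \<longlonglongrightarrow> x" using tendsto_diff[OF tendsto_const t0] by simp
  have "(\<lambda>n. real_of_int (Kd b x n) / real b ^ n) \<longlonglongrightarrow> x"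
    by (rule tendsto_sandwich[OF _ _ t1 tendsto_const]) (use lo hi in auto)
  then show ?thesis unfolding sums_def using Dd_partial[OF assms] by simp
qed

lemma Dd_infinite:
  assumes "b \<ge> 2" "0 < x" "x \<le> 1"
  shows "\<exists>n>m. Dd b x n \<noteq> 0"
proof (rule ccontr)
  assume "\<not> (\<exists>n>m. Dd b x n \<noteq> 0)"
  then have z: "\<And>n. n > m \<Longrightarrow> Dd b x n = 0" by auto
  have bp: "real b > 1" using assms by simp
  have c: "real_of_int (Kd b x (m + j)) / real b ^ (m + j) = real_of_int (Kd b x m) / real b ^ m" for j
  proof (induction j)
    case (Suc j)
    have "Kd b x (Suc (m + j)) = int b * Kd b x (m + j)" using Kd_Suc[OF assms(1), of x "m + j"] z[of "Suc (m+j)"] by simp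
    then have "real_of_int (Kd b x (m + Suc j)) / real b ^ (m + Suc j) = real_of_int (Kd b x (m + j)) / real b ^ (m + j)"
      using bp by (simp add: field_simps)
    then show ?case using Suc by simp
  qed simp
  define g where "g = x - real_of_int (Kd b x m) / real b ^ m"
  have gp: "g > 0" using Kd_bounds(1)[of b x m] bp by (simp add: g_def field_simps)
  have t0: "(\<lambda>n. (1 / real b) ^ n) \<longlonglongrightarrow> 0" using bp by (intro LIMSEQ_power_zero) auto
  from LIMSEQ_D[OF t0 gp] obtain N where N0: "\<forall>n\<ge>N. norm ((1 / real b) ^ n - 0) < g" by blast
  have N: "(1 / real b) ^ n < g" if "n \<ge> N" for n
  proof -
    have "norm ((1 / real b) ^ n - 0) < g" using N0 that by blast
    moreover have "(1 / real b) ^ n \<ge> 0" using bp by simp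
    ultimately show ?thesis by simp
  qed
  have "x * real b ^ (m + N) \<le> real_of_int (Kd b x (m + N)) + 1" by (rule Kd_bounds)
  then have "x \<le> real_of_int (Kd b x (m + N)) / real b ^ (m + N) + (1 / real b) ^ (m + N)"
    using bp by (simp add: field_simps power_divide)
  then have "g \<le> (1 / real b) ^ (m + N)" using c[of N] by (simp add: g_def)
  then show False using N[of "m + N"] by simp
qed

lemma digits_unique_aux:
  assumes b: "b \<ge> 2" and x: "0 < x" "x \<le> 1"
    and d: "\<forall>n. d n < b" "d 0 = 0" "x = (\<Sum>n. real (d (Suc n)) / real b ^ Suc n)" "\<forall>m. \<exists>n>m. d n \<noteq> 0"
  shows "d = Dd b x"
proof -
  have bp: "real b > 1" using b by simp
  define f where "f n = real (d (Suc n)) / real b ^ Suc n" for n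
  define g where "g n = (real b - 1) / real b ^ Suc n" for n
  have f0: "f n \<ge> 0" for n by (simp add: f_def)
  have fg: "f n \<le> g n" for n
  proof -
    have "d (Suc n) + 1 \<le> b" using d(1) by (simp add: Suc_le_eq)
    then have "real (d (Suc n) + 1) \<le> real b" by (simp only: of_nat_le_iff)
    then have "real (d (Suc n)) \<le> real b - 1" by simp
    then show ?thesis unfolding f_def g_def by (simp add: divide_right_mono)
  qed
  have gs: "summable g"
  proof -
    have "g = (\<lambda>n. ((real b - 1) / real b) * (1 / real b) ^ n)" by (auto simp: g_def field_simps)
    then show ?thesis using bp by (auto intro!: summable_mult summable_geometric)
  qed
  have fs: "summable f" using summable_comparison_test[of f g] f0 fg gs by auto
  have gsum: "(\<Sum>i. g (i + n)) = 1 / real b ^ n" for n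
  proof -
    define c where "c = (real b - 1) / real b ^ Suc n"
    have eq: "(\<lambda>i. g (i + n)) = (\<lambda>i. c * (1 / real b) ^ i)"
      by (auto simp: g_def c_def field_simps power_add)
    have q: "norm (1 / real b) < 1" using bp by simp
    have "(\<Sum>i. g (i + n)) = c * (\<Sum>i. (1 / real b) ^ i)"
      unfolding eq by (rule suminf_mult[OF summable_geometric[OF q]])
    also have "\<dots> = ((real b - 1) / real b ^ Suc n) * (1 / (1 - 1 / real b))"
      using suminf_geometric[OF q] by (simp add: c_def)
    also have "\<dots> = 1 / real b ^ n" using bp by (simp add: field_simps)
    finally show ?thesis .
  qed
  define J where "J n = (\<Sum>i<n. f i) * real b ^ n" for n
  have Jrec: "J (Suc n) = real b * J n + real (d (Suc n))" for n
    using bp by (simp add: J_def f_def field_simps)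
  have Jint: "J n = real_of_int (Kd b x n)" for n
  proof -
    define Ji where "Ji = rec_nat (0::int) (\<lambda>n j. int b * j + int (d (Suc n)))"
    have JJ: "J n = real_of_int (Ji n)" for n
    proof (induction n)
      case 0 show ?case by (simp add: J_def Ji_def)
    next
      case (Suc n) show ?case using Jrec[of n] Suc by (simp add: Ji_def)
    qed
    have xs: "x = suminf f"
    proof -
      have "f = (\<lambda>n. real (d (Suc n)) / real b ^ Suc n)" by (simp add: fun_eq_iff f_def)
      then show ?thesis using d(3) by simp
    qed
    have tail: "x - (\<Sum>i<n. f i) = (\<Sum>i. f (i + n))"
      using suminf_split_initial_segment[OF fs, of n] xs by simp
    have ts: "summable (\<lambda>i. f (i + n))" using fs by (simp add: summable_iff_shift)
    have gts: "summable (\<lambda>i. g (i + n))" using gs by (simp add: summable_iff_shift)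
    have up: "(\<Sum>i. f (i + n)) \<le> 1 / real b ^ n"
      using suminf_le[OF _ ts gts] fg gsum by auto
    obtain m where m: "m > n" "d m \<noteq> 0" using d(4) by auto
    have fpos: "f (m - 1 - n + n) > 0" using m bp by (auto simp: f_def Suc_diff_Suc)
    have lo: "(\<Sum>i. f (i + n)) > 0"
      using suminf_pos2[OF ts _ fpos] f0 by auto
    have "x * real b ^ n - J n = (\<Sum>i. f (i + n)) * real b ^ n" using tail by (simp add: J_def algebra_simps)
    then have r1: "0 < x * real b ^ n - J n" "x * real b ^ n - J n \<le> 1"
      using up lo bp by (auto simp: field_simps)
    have "\<lceil>x * real b ^ n\<rceil> = Ji n + 1" using r1 JJ[of n] by (intro ceiling_unique) auto
    then show ?thesis using JJ[of n] by (simp add: Kd_def)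
  qed
  show ?thesis
  proof
    fix n
    show "d n = Dd b x n"
    proof (cases n)
      case 0 then show ?thesis using d(2) by (simp add: Dd_def)
    next
      case (Suc m)
      have "real_of_int (Kd b x (Suc m)) = real b * real_of_int (Kd b x m) + real (d (Suc m))"
        using Jrec[of m] Jint by simp
      then have "real_of_int (Kd b x (Suc m)) = real_of_int (int b * Kd b x m + int (d (Suc m)))"
        by simp
      then have "Kd b x (Suc m) = int b * Kd b x m + int (d (Suc m))"
        by (subst (asm) of_int_eq_iff)
      then show ?thesis using Suc by (simp add: Dd_def)
    qed
  qed
qed

lemma digits_eq:
  assumes "b \<ge> 2" "0 < x" "x \<le> 1"
  shows "digits b x = Dd b x"
  unfolding digits_def
proof (rule the_equality)
  show "(\<forall>n. Dd b x n < b) \<and> Dd b x 0 = 0 \<and> x = (\<Sum>n. real (Dd b x (Suc n)) / real b ^ Suc n) \<and> (\<forall>m. \<exists>n>m. Dd b x n \<noteq> 0)"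
    using Dd_lt[OF assms(1)] Dd_sums[OF assms] Dd_infinite[OF assms] by (auto simp: Dd_def sums_iff)
next
  fix d assume "(\<forall>n. d n < b) \<and> d 0 = 0 \<and> x = (\<Sum>n. real (d (Suc n)) / real b ^ Suc n) \<and> (\<forall>m. \<exists>n>m. d n \<noteq> 0)"
  then show "d = Dd b x" using digits_unique_aux[OF assms] by blast
qed

definition cw :: "nat list \<Rightarrow> nat \<Rightarrow> nat \<Rightarrow> nat list" where
  "cw z k t = map (\<lambda>j. z ! ((t + j) mod length z)) [0..<k]"

definition cnt :: "nat list \<Rightarrow> nat \<Rightarrow> nat list \<Rightarrow> real" where
  "cnt z k s = (\<Sum>t<length z. if cw z k t = s then 1 else 0)"

definition pw :: "nat list \<Rightarrow> nat \<Rightarrow> nat list" where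
  "pw z q = map (\<lambda>i. z ! (i mod length z)) [0..<q * length z]"

lemma sum_split_add: "(\<Sum>t<a + b. f t) = (\<Sum>t<a. f t) + (\<Sum>t<b. f (a + t))"
  for f :: "nat \<Rightarrow> real"
  by (induction b) (auto simp: add.commute add.left_commute)

lemma sum_periodic_mult:
  fixes f :: "nat \<Rightarrow> real"
  assumes "\<And>t. f (t + p) = f t"
  shows "(\<Sum>t<q * p. f t) = real q * (\<Sum>t<p. f t)"
proof (induction q)
  case (Suc q)
  have per: "f (q * p + t) = f t" for t
  proof (induction q)
    case (Suc q)
    have "f (Suc q * p + t) = f ((q * p + t) + p)" by (simp add: algebra_simps)
    then show ?case using assms Suc by simp
  qed simp
  have "(\<Sum>t<Suc q * p. f t) = (\<Sum>t<q * p + p. f t)" by (simp add: add.commute)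
  also have "\<dots> = (\<Sum>t<q * p. f t) + (\<Sum>t<p. f (q * p + t))" by (rule sum_split_add)
  also have "\<dots> = real (Suc q) * (\<Sum>t<p. f t)" using Suc per by (simp add: algebra_simps)
  finally show ?case .
qed simp

lemma sum_periodic_approx:
  fixes f :: "nat \<Rightarrow> real"
  assumes per: "\<And>t. f (t + p) = f t" and p: "p > 0" and f: "\<And>t. 0 \<le> f t"
  shows "\<bar>(\<Sum>t<N. f t) - real N * (\<Sum>t<p. f t) / real p\<bar> \<le> (\<Sum>t<p. f t)"
proof -
  define S where "S = (\<Sum>t<p. f t)"
  define q where "q = N div p"
  define r where "r = N mod p"
  have N: "N = q * p + r" by (simp add: q_def r_def)
  have rp: "r < p" using p by (simp add: r_def)
  have perq: "f (q * p + t) = f t" for t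
  proof (induction q)
    case (Suc q)
    have "f (Suc q * p + t) = f ((q * p + t) + p)" by (simp add: algebra_simps)
    then show ?case using per Suc by simp
  qed simp
  have "(\<Sum>t<N. f t) = (\<Sum>t<q * p. f t) + (\<Sum>t<r. f (q * p + t))" unfolding N by (rule sum_split_add)
  also have "\<dots> = real q * S + (\<Sum>t<r. f t)" using sum_periodic_mult[of f p q, OF per] perq by (simp add: S_def)
  finally have e: "(\<Sum>t<N. f t) = real q * S + (\<Sum>t<r. f t)" .
  have R0: "0 \<le> (\<Sum>t<r. f t)" using f by (simp add: sum_nonneg)
  have R1: "(\<Sum>t<r. f t) \<le> S" unfolding S_def using rp f by (intro sum_mono2) auto
  have S0: "0 \<le> S" unfolding S_def using f by (simp add: sum_nonneg)
  have "real N * S / real p = real q * S + real r * S / real p" using p by (simp add: N field_simps)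
  moreover have "0 \<le> real r * S / real p" using S0 by simp
  moreover have "real r * S / real p \<le> S"
  proof -
    have "real r * S \<le> real p * S" using rp S0 by (intro mult_right_mono) auto
    then show ?thesis using p by (simp add: field_simps)
  qed
  ultimately show ?thesis using e R0 R1 unfolding S_def[symmetric] abs_le_iff by linarith
qed

lemma length_cw [simp]: "length (cw z k t) = k" by (simp add: cw_def)

lemma nth_cw: "j < k \<Longrightarrow> cw z k t ! j = z ! ((t + j) mod length z)" by (simp add: cw_def)

lemma cw_periodic: "cw z k (t + length z) = cw z k t"
proof -
  have "(t + length z + j) mod length z = (t + j) mod length z" for j
    by (metis add.commute add.left_commute mod_add_self2)
  then show ?thesis by (simp add: cw_def)
qed

lemma cw_mod: "cw z k (t mod length z) = cw z k t"
  by (simp add: cw_def mod_add_left_eq)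

lemma cw_in_strings:
  assumes "set z \<subseteq> {..<b}" "z \<noteq> []"
  shows "cw z k t \<in> strings b k"
proof -
  have "z ! ((t + j) mod length z) < b" for j using assms by (auto simp: subset_iff)
  then show ?thesis by (auto simp: strings_def cw_def)
qed

lemma cnt_nonneg: "0 \<le> cnt z k s" by (simp add: cnt_def sum_nonneg)

lemma cnt_le: "cnt z k s \<le> real (length z)"
proof -
  have "cnt z k s \<le> (\<Sum>t<length z. (1::real))" unfolding cnt_def by (intro sum_mono) auto
  then show ?thesis by simp
qed

lemma cnt_off:
  assumes "set z \<subseteq> {..<b}" "s \<notin> strings b k"
  shows "cnt z k s = 0"
proof (cases "z = []")
  case True then show ?thesis by (simp add: cnt_def)
next
  case False
  then have "cw z k t \<noteq> s" for t using cw_in_strings[OF assms(1) False] assms(2) by metis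
  then show ?thesis by (simp add: cnt_def)
qed

lemma finite_strings: "finite (strings b k)"
proof -
  have "strings b k = {xs. set xs \<subseteq> {..<b} \<and> length xs = k}" by (auto simp: strings_def)
  then show ?thesis by (simp add: finite_lists_length_eq)
qed

lemma sum_fibres:
  fixes h :: "'a \<Rightarrow> 'b"
  assumes "finite T" "finite E" "h ` T \<subseteq> E"
  shows "(\<Sum>s\<in>E. (\<Sum>t\<in>T. if h t = s then 1 else 0)) = real (card T)"
proof -
  have "(\<Sum>s\<in>E. (\<Sum>t\<in>T. if h t = s then 1 else (0::real))) = (\<Sum>t\<in>T. (\<Sum>s\<in>E. if h t = s then 1 else 0))"
    by (rule sum.swap)
  also have "\<dots> = (\<Sum>t\<in>T. (1::real))"
  proof (rule sum.cong[OF refl])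
    fix t assume "t \<in> T"
    then have "h t \<in> E" using assms(3) by auto
    then show "(\<Sum>s\<in>E. if h t = s then 1 else 0) = (1::real)" using assms(2)
      by (simp add: sum.delta)
  qed
  finally show ?thesis by simp
qed

lemma sum_cnt:
  assumes "set z \<subseteq> {..<b}"
  shows "(\<Sum>s\<in>strings b k. cnt z k s) = real (length z)"
proof (cases "z = []")
  case True then show ?thesis by (simp add: cnt_def)
next
  case False
  show ?thesis unfolding cnt_def
    using sum_fibres[of "{..<length z}" "strings b k" "cw z k"] cw_in_strings[OF assms False] finite_strings
    by auto
qed

lemma tl_cw: "tl (cw z k t) = cw z (k - 1) (Suc t)"
  by (rule nth_equalityI) (auto simp: nth_tl nth_cw)

lemma butlast_cw: "butlast (cw z k t) = cw z (k - 1) t"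
  by (rule nth_equalityI) (auto simp: nth_butlast nth_cw)

lemma cnt_shift:
  "(\<Sum>t<length z. if cw z k (Suc t) = s then 1 else 0) = (cnt z k s :: real)"
proof -
  define g where "g t = (if cw z k t = s then 1 else (0::real))" for t
  have "(\<Sum>t<Suc (length z). g t) = (\<Sum>t<length z. g t) + g (length z)" by simp
  moreover have "(\<Sum>t<Suc (length z). g t) = g 0 + (\<Sum>t<length z. g (Suc t))" by (rule sum.lessThan_Suc_shift)
  moreover have "g (length z) = g 0" using cw_periodic[of z k 0] by (simp add: g_def)
  ultimately show ?thesis by (simp add: g_def cnt_def)
qed

lemma cnt_circ:
  assumes "set z \<subseteq> {..<b}" "k \<ge> 1" "length v = k - 1"
  shows "(\<Sum>a<b. cnt z k (a # v)) = (\<Sum>a<b. cnt z k (v @ [a]))"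
proof (cases "z = []")
  case True then show ?thesis by (simp add: cnt_def)
next
  case False
  have ins: "cw z k t \<in> strings b k" for t by (rule cw_in_strings[OF assms(1) False])
  have ne: "cw z k t \<noteq> []" for t using assms(2) by (metis length_cw list.size(3) not_one_le_zero)
  have "(\<Sum>a<b. cnt z k (a # v)) = (\<Sum>a<b. \<Sum>t\<in>{t. t < length z \<and> tl (cw z k t) = v}. if hd (cw z k t) = a then 1 else 0)"
    unfolding cnt_def
  proof (rule sum.cong[OF refl])
    fix a
    have "(\<Sum>t<length z. if cw z k t = a # v then 1 else 0) =
          (\<Sum>t\<in>{..<length z}. if tl (cw z k t) = v then (if hd (cw z k t) = a then 1 else 0) else (0::real))"
    proof (rule sum.cong[OF refl])
      fix t
      have "cw z k t = a # v \<longleftrightarrow> hd (cw z k t) = a \<and> tl (cw z k t) = v"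
        using ne[of t] by (cases "cw z k t") auto
      then show "(if cw z k t = a # v then 1 else 0) = (if tl (cw z k t) = v then (if hd (cw z k t) = a then 1 else 0) else (0::real))"
        by auto
    qed
    also have "\<dots> = (\<Sum>t\<in>{t. t < length z \<and> tl (cw z k t) = v}. if hd (cw z k t) = a then 1 else 0)"
      by (simp add: sum.inter_filter[symmetric] lessThan_def)
    finally show "(\<Sum>t<length z. if cw z k t = a # v then 1 else 0) = (\<Sum>t\<in>{t. t < length z \<and> tl (cw z k t) = v}. if hd (cw z k t) = a then 1 else (0::real))" .
  qed
  also have "\<dots> = real (card {t. t < length z \<and> tl (cw z k t) = v})"
  proof (rule sum_fibres)
    show "(\<lambda>t. hd (cw z k t)) ` {t. t < length z \<and> tl (cw z k t) = v} \<subseteq> {..<b}"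
    proof
      fix a assume "a \<in> (\<lambda>t. hd (cw z k t)) ` {t. t < length z \<and> tl (cw z k t) = v}"
      then obtain t where "a = hd (cw z k t)" by auto
      moreover have "set (cw z k t) \<subseteq> {..<b}" using ins[of t] by (simp add: strings_def)
      ultimately show "a \<in> {..<b}" using ne[of t] by (cases "cw z k t") auto
    qed
  qed auto
  also have "\<dots> = (\<Sum>t<length z. if cw z (k - 1) (Suc t) = v then 1 else 0)"
    by (simp add: tl_cw sum.If_cases lessThan_def Collect_conj_eq Int_commute)
  also have "\<dots> = cnt z (k - 1) v" by (rule cnt_shift)
  finally have L: "(\<Sum>a<b. cnt z k (a # v)) = cnt z (k - 1) v" .
  have "(\<Sum>a<b. cnt z k (v @ [a])) = (\<Sum>a<b. \<Sum>t\<in>{t. t < length z \<and> butlast (cw z k t) = v}. if last (cw z k t) = a then 1 else 0)"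
    unfolding cnt_def
  proof (rule sum.cong[OF refl])
    fix a
    have "(\<Sum>t<length z. if cw z k t = v @ [a] then 1 else 0) =
          (\<Sum>t\<in>{..<length z}. if butlast (cw z k t) = v then (if last (cw z k t) = a then 1 else 0) else (0::real))"
    proof (rule sum.cong[OF refl])
      fix t
      have "cw z k t = v @ [a] \<longleftrightarrow> last (cw z k t) = a \<and> butlast (cw z k t) = v"
        using ne[of t] by (metis append_butlast_last_id butlast_snoc last_snoc)
      then show "(if cw z k t = v @ [a] then 1 else 0) = (if butlast (cw z k t) = v then (if last (cw z k t) = a then 1 else 0) else (0::real))"
        by auto
    qed
    also have "\<dots> = (\<Sum>t\<in>{t. t < length z \<and> butlast (cw z k t) = v}. if last (cw z k t) = a then 1 else 0)"
      by (simp add: sum.inter_filter[symmetric] lessThan_def)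
    finally show "(\<Sum>t<length z. if cw z k t = v @ [a] then 1 else 0) = (\<Sum>t\<in>{t. t < length z \<and> butlast (cw z k t) = v}. if last (cw z k t) = a then 1 else (0::real))" .
  qed
  also have "\<dots> = real (card {t. t < length z \<and> butlast (cw z k t) = v})"
  proof (rule sum_fibres)
    show "(\<lambda>t. last (cw z k t)) ` {t. t < length z \<and> butlast (cw z k t) = v} \<subseteq> {..<b}"
    proof
      fix a assume "a \<in> (\<lambda>t. last (cw z k t)) ` {t. t < length z \<and> butlast (cw z k t) = v}"
      then obtain t where "a = last (cw z k t)" by auto
      moreover have "set (cw z k t) \<subseteq> {..<b}" using ins[of t] by (simp add: strings_def)
      ultimately show "a \<in> {..<b}" using ne[of t] last_in_set by blast
    qed
  qed auto
  also have "\<dots> = cnt z (k - 1) v"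
    by (simp add: butlast_cw sum.If_cases lessThan_def Collect_conj_eq Int_commute cnt_def)
  finally show ?thesis using L by simp
qed

lemma cnt_pw_ne:
  assumes "z \<noteq> []"
  shows "cnt (pw z q) k s = real q * cnt z k s"
proof -
  have len: "length (pw z q) = q * length z" by (simp add: pw_def)
  have cwe: "cw (pw z q) k t = cw z k t" if "t < q * length z" for t
  proof (rule nth_equalityI)
    fix j assume "j < length (cw (pw z q) k t)"
    then have j: "j < k" by simp
    have qp: "q * length z > 0" by (rule le_less_trans[OF le0 that])
    have "cw (pw z q) k t ! j = pw z q ! ((t + j) mod (q * length z))" using j len by (simp add: nth_cw)
    also have "\<dots> = z ! (((t + j) mod (q * length z)) mod length z)" using qp by (simp add: pw_def)
    also have "\<dots> = z ! ((t + j) mod length z)" by (simp add: mod_mod_cancel)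
    finally show "cw (pw z q) k t ! j = cw z k t ! j" using j by (simp add: nth_cw)
  qed simp
  have "cnt (pw z q) k s = (\<Sum>t<q * length z. if cw z k t = s then 1 else 0)"
    unfolding cnt_def len by (rule sum.cong) (auto simp: cwe)
  also have "\<dots> = real q * cnt z k s" unfolding cnt_def
    by (rule sum_periodic_mult) (simp add: cw_periodic)
  finally show ?thesis .
qed

lemma cnt_pw: "cnt (pw z q) k s = real q * cnt z k s"
proof (cases "z = []")
  case True then show ?thesis by (simp add: pw_def cnt_def)
next
  case False then show ?thesis by (rule cnt_pw_ne)
qed

lemma set_pw: "set (pw z q) \<subseteq> set z"
proof
  fix a assume "a \<in> set (pw z q)"
  then obtain i where i: "i < q * length z" "a = z ! (i mod length z)" by (auto simp: pw_def)
  then have "length z > 0" by (cases "length z") auto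
  then show "a \<in> set z" using i by simp
qed

lemma sum_indic_tail:
  "(\<Sum>t<n. if n < t + k then 1 else 0) \<le> (real k :: real)"
proof -
  have "(\<Sum>t<n. if n < t + k then 1 else (0::real)) = real (card {t. t < n \<and> n < t + k})"
    by (simp add: sum.If_cases lessThan_def Collect_conj_eq)
  also have "card {t. t < n \<and> n < t + k} \<le> card {n - k..<n}"
    by (rule card_mono) auto
  finally show ?thesis by simp
qed

lemma cnt_append:
  "\<bar>cnt (u @ v) k s - cnt u k s - cnt v k s\<bar> \<le> 2 * real k"
proof -
  define W where "W = u @ v"
  define f where "f t = (if cw W k t = s then 1 else (0::real))" for t
  have "cnt W k s = (\<Sum>t<length u. f t) + (\<Sum>t<length v. f (length u + t))"
    unfolding cnt_def f_def W_def by (simp add: sum_split_add)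
  moreover
  have A: "\<bar>(\<Sum>t<length u. f t) - cnt u k s\<bar> \<le> real k"
  proof -
    have "\<bar>(\<Sum>t<length u. f t) - cnt u k s\<bar> = \<bar>\<Sum>t<length u. f t - (if cw u k t = s then 1 else 0)\<bar>"
      by (simp add: cnt_def sum_subtractf)
    also have "\<dots> \<le> (\<Sum>t<length u. \<bar>f t - (if cw u k t = s then 1 else 0)\<bar>)" by (rule sum_abs)
    also have "\<dots> \<le> (\<Sum>t<length u. if length u < t + k then 1 else 0)"
    proof (rule sum_mono)
      fix t assume t: "t \<in> {..<length u}"
      show "\<bar>f t - (if cw u k t = s then 1 else 0)\<bar> \<le> (if length u < t + k then 1 else 0)"
      proof (cases "length u < t + k")
        case False
        have "cw W k t = cw u k t"
        proof (rule nth_equalityI)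
          fix j assume "j < length (cw W k t)"
          then have j: "j < k" by simp
          then have lt: "t + j < length u" using False by simp
          then show "cw W k t ! j = cw u k t ! j" using j by (simp add: nth_cw W_def nth_append)
        qed simp
        then show ?thesis using False by (simp add: f_def)
      qed (auto simp: f_def)
    qed
    also have "\<dots> \<le> real k" by (rule sum_indic_tail)
    finally show ?thesis .
  qed
  moreover
  have B: "\<bar>(\<Sum>t<length v. f (length u + t)) - cnt v k s\<bar> \<le> real k"
  proof -
    have "\<bar>(\<Sum>t<length v. f (length u + t)) - cnt v k s\<bar> = \<bar>\<Sum>t<length v. f (length u + t) - (if cw v k t = s then 1 else 0)\<bar>"
      by (simp add: cnt_def sum_subtractf)
    also have "\<dots> \<le> (\<Sum>t<length v. \<bar>f (length u + t) - (if cw v k t = s then 1 else 0)\<bar>)" by (rule sum_abs)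
    also have "\<dots> \<le> (\<Sum>t<length v. if length v < t + k then 1 else 0)"
    proof (rule sum_mono)
      fix t assume t: "t \<in> {..<length v}"
      show "\<bar>f (length u + t) - (if cw v k t = s then 1 else 0)\<bar> \<le> (if length v < t + k then 1 else 0)"
      proof (cases "length v < t + k")
        case False
        have "cw W k (length u + t) = cw v k t"
        proof (rule nth_equalityI)
          fix j assume "j < length (cw W k (length u + t))"
          then have j: "j < k" by simp
          then have lt: "t + j < length v" using False by simp
          have "(length u + t + j) mod length W = length u + (t + j)" using lt by (simp add: W_def)
          then show "cw W k (length u + t) ! j = cw v k t ! j" using j lt
            by (simp add: nth_cw W_def nth_append)
        qed simp
        then show ?thesis using False by (simp add: f_def)
      qed (auto simp: f_def)
    qed
    also have "\<dots> \<le> real k" by (rule sum_indic_tail)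
    finally show ?thesis .
  qed
  ultimately show ?thesis unfolding W_def[symmetric] by linarith
qed

definition circ :: "nat \<Rightarrow> nat \<Rightarrow> (nat list \<Rightarrow> real) \<Rightarrow> bool" where
  "circ b k \<eta> \<longleftrightarrow> (\<forall>s. s \<notin> strings b k \<longrightarrow> \<eta> s = 0) \<and> (\<forall>s\<in>strings b k. 0 \<le> \<eta> s)
     \<and> (\<forall>v\<in>strings b (k - 1). (\<Sum>a<b. \<eta> (a # v)) = (\<Sum>a<b. \<eta> (v @ [a])))"

definition approx :: "nat \<Rightarrow> nat \<Rightarrow> (nat list \<Rightarrow> real) \<Rightarrow> bool" where
  "approx b k \<eta> \<longleftrightarrow> (\<forall>\<epsilon>>0. \<exists>z t. set z \<subseteq> {..<b} \<and> 0 \<le> t \<and> (\<forall>s\<in>strings b k. \<bar>t * cnt z k s - \<eta> s\<bar> < \<epsilon>))"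

lemma approx_cnt: "set y \<subseteq> {..<b} \<Longrightarrow> 0 \<le> c \<Longrightarrow> approx b k (\<lambda>s. c * cnt y k s)"
  unfolding approx_def by (intro allI impI exI[of _ y] exI[of _ c]) auto

lemma floor_approx:
  assumes "0 \<le> (x::real)"
  shows "real (nat \<lfloor>x\<rfloor>) \<le> x" "x - 1 < real (nat \<lfloor>x\<rfloor>)"
  using assms by linarith+

lemma approx_add:
  assumes A1: "approx b k \<eta>1" and A2: "approx b k \<eta>2"
  shows "approx b k (\<lambda>s. \<eta>1 s + \<eta>2 s)"
  unfolding approx_def
proof (intro allI impI)
  fix \<epsilon> :: real assume ep: "\<epsilon> > 0"
  obtain z1 t1 where z1: "set z1 \<subseteq> {..<b}" "0 \<le> t1" "\<forall>s\<in>strings b k. \<bar>t1 * cnt z1 k s - \<eta>1 s\<bar> < \<epsilon> / 3"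
    using A1 ep unfolding approx_def by (meson divide_pos_pos zero_less_numeral)
  obtain z2 t2 where z2: "set z2 \<subseteq> {..<b}" "0 \<le> t2" "\<forall>s\<in>strings b k. \<bar>t2 * cnt z2 k s - \<eta>2 s\<bar> < \<epsilon> / 3"
    using A2 ep unfolding approx_def by (meson divide_pos_pos zero_less_numeral)
  define C where "C = real (length z1 + length z2) + 2 * real k + 1"
  have Cp: "C > 0" by (simp add: C_def)
  obtain N :: nat where N: "3 * C / \<epsilon> < real N" using reals_Archimedean2 by blast
  have Np: "real N > 0" using N Cp ep by (smt (verit) divide_pos_pos)
  have CN: "C / real N < \<epsilon> / 3" using N Np ep Cp by (simp add: field_simps)
  define p where "p = nat \<lfloor>real N * t1\<rfloor>"
  define q where "q = nat \<lfloor>real N * t2\<rfloor>"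
  define Z where "Z = pw z1 p @ pw z2 q"
  define t where "t = 1 / real N"
  have Zb: "set Z \<subseteq> {..<b}" using z1(1) z2(1) set_pw[of z1 p] set_pw[of z2 q] by (auto simp: Z_def)
  have t0: "0 \<le> t" by (simp add: t_def)
  have p1: "\<bar>t * real p - t1\<bar> \<le> t" and q1: "\<bar>t * real q - t2\<bar> \<le> t"
  proof -
    have a: "real p \<le> real N * t1" "real N * t1 - 1 < real p"
      unfolding p_def using floor_approx[of "real N * t1"] z1(2) by auto
    have "\<bar>real p - real N * t1\<bar> \<le> 1" using a by linarith
    then have "\<bar>real p - real N * t1\<bar> / real N \<le> 1 / real N" using Np by (simp add: divide_right_mono)
    then show "\<bar>t * real p - t1\<bar> \<le> t" using Np by (simp add: t_def field_simps abs_divide[symmetric])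
  next
    have a: "real q \<le> real N * t2" "real N * t2 - 1 < real q"
      unfolding q_def using floor_approx[of "real N * t2"] z2(2) by auto
    have "\<bar>real q - real N * t2\<bar> \<le> 1" using a by linarith
    then have "\<bar>real q - real N * t2\<bar> / real N \<le> 1 / real N" using Np by (simp add: divide_right_mono)
    then show "\<bar>t * real q - t2\<bar> \<le> t" using Np by (simp add: t_def field_simps abs_divide[symmetric])
  qed
  have "\<bar>t * cnt Z k s - (\<eta>1 s + \<eta>2 s)\<bar> < \<epsilon>" if s: "s \<in> strings b k" for s
  proof -
    have e1: "\<bar>cnt Z k s - real p * cnt z1 k s - real q * cnt z2 k s\<bar> \<le> 2 * real k"
      using cnt_append[of "pw z1 p" "pw z2 q" k s] by (simp add: Z_def cnt_pw)
    have e1': "\<bar>t * cnt Z k s - t * real p * cnt z1 k s - t * real q * cnt z2 k s\<bar> \<le> t * (2 * real k)"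
    proof -
      have "\<bar>t * cnt Z k s - t * real p * cnt z1 k s - t * real q * cnt z2 k s\<bar>
          = t * \<bar>cnt Z k s - real p * cnt z1 k s - real q * cnt z2 k s\<bar>"
      proof -
        have "t * cnt Z k s - t * real p * cnt z1 k s - t * real q * cnt z2 k s
            = t * (cnt Z k s - real p * cnt z1 k s - real q * cnt z2 k s)" by (simp add: algebra_simps)
        then show ?thesis using t0 by (simp add: abs_mult)
      qed
      then show ?thesis using e1 t0 by (simp add: mult_left_mono)
    qed
    have e2: "\<bar>t * real p * cnt z1 k s - t1 * cnt z1 k s\<bar> \<le> t * real (length z1)"
    proof -
      have "\<bar>t * real p * cnt z1 k s - t1 * cnt z1 k s\<bar> = \<bar>t * real p - t1\<bar> * cnt z1 k s"
        using cnt_nonneg[of z1 k s] by (simp add: abs_mult left_diff_distrib[symmetric])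
      also have "\<dots> \<le> t * real (length z1)" using p1 cnt_le[of z1 k s] cnt_nonneg[of z1 k s] t0
        by (intro mult_mono) auto
      finally show ?thesis .
    qed
    have e3: "\<bar>t * real q * cnt z2 k s - t2 * cnt z2 k s\<bar> \<le> t * real (length z2)"
    proof -
      have "\<bar>t * real q * cnt z2 k s - t2 * cnt z2 k s\<bar> = \<bar>t * real q - t2\<bar> * cnt z2 k s"
        using cnt_nonneg[of z2 k s] by (simp add: abs_mult left_diff_distrib[symmetric])
      also have "\<dots> \<le> t * real (length z2)" using q1 cnt_le[of z2 k s] cnt_nonneg[of z2 k s] t0
        by (intro mult_mono) auto
      finally show ?thesis .
    qed
    have tC: "t * (2 * real k) + t * real (length z1) + t * real (length z2) < \<epsilon> / 3"
    proof -
      have "t * (2 * real k) + t * real (length z1) + t * real (length z2) \<le> t * C"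
        using t0 by (simp add: C_def algebra_simps)
      also have "t * C = C / real N" by (simp add: t_def)
      finally show ?thesis using CN by linarith
    qed
    have a: "\<bar>t1 * cnt z1 k s - \<eta>1 s\<bar> < \<epsilon> / 3" using z1(3) s by blast
    have b: "\<bar>t2 * cnt z2 k s - \<eta>2 s\<bar> < \<epsilon> / 3" using z2(3) s by blast
    show ?thesis using e1' e2 e3 tC a b unfolding abs_le_iff abs_less_iff by linarith
  qed
  then show "\<exists>z t. set z \<subseteq> {..<b} \<and> 0 \<le> t \<and> (\<forall>s\<in>strings b k. \<bar>t * cnt z k s - (\<eta>1 s + \<eta>2 s)\<bar> < \<epsilon>)"
    using Zb t0 by blast
qed

lemma strings_nonneg_sum_pos:
  fixes \<eta> :: "nat list \<Rightarrow> real"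
  assumes "(\<Sum>a<b. \<eta> (g a)) > 0"
  shows "\<exists>a<b. \<eta> (g a) > 0"
proof (rule ccontr)
  assume "\<not> (\<exists>a<b. \<eta> (g a) > 0)"
  then have "(\<Sum>a<b. \<eta> (g a)) \<le> (\<Sum>a<b. 0)" by (intro sum_mono) force
  then show False using assms by simp
qed

lemma cycle_exists:
  assumes c: "circ b k \<eta>" and k: "k \<ge> 1" and s0: "s0 \<in> strings b k" "\<eta> s0 > 0"
  shows "\<exists>y. y \<noteq> [] \<and> set y \<subseteq> {..<b} \<and> (\<forall>s. cnt y k s > 0 \<longrightarrow> \<eta> s > 0)"
proof -
  have off: "\<And>s. s \<notin> strings b k \<Longrightarrow> \<eta> s = 0" and nn: "\<And>s. s \<in> strings b k \<Longrightarrow> 0 \<le> \<eta> s"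
    and bal: "\<And>v. v \<in> strings b (k - 1) \<Longrightarrow> (\<Sum>a<b. \<eta> (a # v)) = (\<Sum>a<b. \<eta> (v @ [a]))"
    using c by (auto simp: circ_def)
  define G where "G w = (w \<in> strings b k \<and> \<eta> w > 0)" for w
  define nxt where "nxt w = tl w @ [SOME a. a < b \<and> \<eta> (tl w @ [a]) > 0]" for w
  have step: "G (nxt w)" if "G w" for w
  proof -
    have w: "w \<in> strings b k" "\<eta> w > 0" using that by (auto simp: G_def)
    have wne: "w \<noteq> []" using w(1) k by (auto simp: strings_def)
    define v where "v = tl w"
    have v: "v \<in> strings b (k - 1)" using w(1) by (auto simp: strings_def v_def dest: list.set_sel(2)[OF wne])
    have hw: "hd w < b" using w(1) hd_in_set[OF wne] by (auto simp: strings_def)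
    have weq: "w = hd w # v" using wne by (simp add: v_def)
    have "\<eta> w \<le> (\<Sum>a<b. \<eta> (a # v))"
    proof -
      have "\<eta> (hd w # v) \<le> (\<Sum>a<b. \<eta> (a # v))"
      proof (rule member_le_sum[where f = "\<lambda>a. \<eta> (a # v)"])
        have "x # v \<in> strings b k" if "x < b" for x using v k that by (auto simp: strings_def)
        then show "\<And>x. x \<in> {..<b} - {hd w} \<Longrightarrow> 0 \<le> \<eta> (x # v)" using nn by auto
      qed (use hw in auto)
      then show ?thesis using weq by simp
    qed
    then have "(\<Sum>a<b. \<eta> (v @ [a])) > 0" using bal[OF v] w(2) by simp
    then have ex: "\<exists>a. a < b \<and> \<eta> (v @ [a]) > 0" using strings_nonneg_sum_pos[where \<eta>=\<eta> and b=b and g="\<lambda>a. v @ [a]"] by auto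
    have sp: "(SOME a. a < b \<and> \<eta> (v @ [a]) > 0) < b \<and> \<eta> (v @ [SOME a. a < b \<and> \<eta> (v @ [a]) > 0]) > 0"
      by (rule someI_ex[OF ex])
    then have "\<eta> (nxt w) > 0" by (simp add: nxt_def v_def)
    moreover then have "nxt w \<in> strings b k" using off by fastforce
    ultimately show ?thesis by (simp add: G_def)
  qed
  define f where "f n = (nxt ^^ n) s0" for n
  have fS: "f (Suc n) = nxt (f n)" for n by (simp add: f_def)
  have fG: "G (f n)" for n
    by (induction n) (use s0 step in \<open>auto simp: f_def G_def\<close>)
  have fE: "f n \<in> strings b k" for n using fG[of n] by (simp add: G_def)
  have flen: "length (f n) = k" for n using fE[of n] by (simp add: strings_def)
  define e where "e n = hd (f n)" for n
  have fnth: "f n ! j = e (n + j)" if "j < k" for n j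
    using that
  proof (induction j arbitrary: n)
    case 0
    have "f n \<noteq> []" using flen[of n] k by auto
    then show ?case by (simp add: e_def hd_conv_nth)
  next
    case (Suc j)
    have "f n ! Suc j = tl (f n) ! j" using Suc.prems flen[of n] by (simp add: nth_tl)
    also have "\<dots> = nxt (f n) ! j"
    proof -
      have jl: "j < length (tl (f n))" using Suc.prems flen[of n] by simp
      then show ?thesis by (simp add: nxt_def nth_append)
    qed
    also have "\<dots> = f (Suc n) ! j" by (simp add: fS)
    also have "\<dots> = e (Suc n + j)" using Suc by simp
    finally show ?case by simp
  qed
  have eb: "e n < b" for n
  proof -
    have "f n \<noteq> []" using flen[of n] k by auto
    then have "hd (f n) \<in> set (f n)" by (rule hd_in_set)
    moreover have "set (f n) \<subseteq> {..<b}" using fE[of n] by (simp add: strings_def)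
    ultimately show ?thesis by (auto simp: e_def)
  qed
  have "\<not> inj f"
  proof
    assume "inj f"
    moreover have "finite (range f)" using finite_subset[OF _ finite_strings] fE by blast
    ultimately show False using finite_imageD by (metis infinite_UNIV_nat)
  qed
  then obtain i j where ij0: "i \<noteq> j" "f i = f j" unfolding inj_def by blast
  obtain i j where ij: "i < j" "f i = f j"
  proof (cases "i < j")
    case True then show ?thesis using ij0 that by blast
  next
    case False then show ?thesis using ij0 that[of j i] by auto
  qed
  define p where "p = j - i"
  have pp: "p > 0" using ij by (simp add: p_def)
  have fper: "f (i + m + p) = f (i + m)" for m
  proof (induction m)
    case 0 then show ?case using ij by (simp add: p_def)
  next
    case (Suc m)
    then show ?case by (metis add_Suc add_Suc_shift fS)
  qed
  have fmod: "f (i + m) = f (i + m mod p)" for m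
  proof (induction m rule: less_induct)
    case (less m)
    show ?case
    proof (cases "m < p")
      case True then show ?thesis by simp
    next
      case False
      then obtain m' where m': "m = m' + p" by (metis add.commute le_add_diff_inverse not_less)
      have "f (i + m) = f (i + m')" using fper[of m'] by (simp add: m' add.assoc)
      also have "\<dots> = f (i + m' mod p)" using less m' pp by simp
      finally show ?thesis by (simp add: m')
    qed
  qed
  have emod: "e (i + m) = e (i + m mod p)" for m using fmod[of m] by (simp add: e_def)
  define y where "y = map (\<lambda>t. e (i + t)) [0..<p]"
  have ylen: "length y = p" by (simp add: y_def)
  have cwy: "cw y k t = f (i + t)" if "t < p" for t
  proof (rule nth_equalityI)
    show "length (cw y k t) = length (f (i + t))" by (simp add: flen)
  next
    fix j assume "j < length (cw y k t)"
    then have j: "j < k" by simp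
    have "cw y k t ! j = y ! ((t + j) mod p)" using j by (simp add: nth_cw ylen)
    also have "\<dots> = e (i + (t + j) mod p)" using pp by (simp add: y_def)
    also have "\<dots> = e (i + (t + j))" using emod[of "t + j"] by simp
    also have "\<dots> = f (i + t) ! j" using fnth[OF j, of "i + t"] by (simp add: add.assoc)
    finally show "cw y k t ! j = f (i + t) ! j" .
  qed
  have "y \<noteq> []" using pp ylen by auto
  moreover have "set y \<subseteq> {..<b}" using eb by (auto simp: y_def)
  moreover have "\<eta> s > 0" if "cnt y k s > 0" for s
  proof -
    have "\<exists>t<p. cw y k t = s"
    proof (rule ccontr)
      assume "\<not> (\<exists>t<p. cw y k t = s)"
      then have "cnt y k s = 0" by (simp add: cnt_def ylen)
      then show False using that by simp
    qed
    then obtain t where "t < p" "cw y k t = s" by blast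
    then have "s = f (i + t)" using cwy by simp
    then show ?thesis using fG[of "i + t"] by (simp add: G_def)
  qed
  ultimately show ?thesis by blast
qed

lemma decomp_aux:
  assumes k: "k \<ge> 1"
  shows "\<forall>\<eta>. circ b k \<eta> \<and> card {s\<in>strings b k. \<eta> s \<noteq> 0} = n \<longrightarrow> approx b k \<eta>"
proof (induction n rule: less_induct)
  case (less n)
  show ?case
  proof (intro allI impI)
    fix \<eta> assume H: "circ b k \<eta> \<and> card {s\<in>strings b k. \<eta> s \<noteq> 0} = n"
    have c: "circ b k \<eta>" using H by simp
    have off: "\<And>s. s \<notin> strings b k \<Longrightarrow> \<eta> s = 0" and nn: "\<And>s. s \<in> strings b k \<Longrightarrow> 0 \<le> \<eta> s"
      and bal: "\<And>v. v \<in> strings b (k - 1) \<Longrightarrow> (\<Sum>a<b. \<eta> (a # v)) = (\<Sum>a<b. \<eta> (v @ [a]))"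
      using c by (auto simp: circ_def)
    show "approx b k \<eta>"
    proof (cases "\<exists>s0\<in>strings b k. \<eta> s0 \<noteq> 0")
      case False
      then have "\<eta> s = 0" for s using off by (cases "s \<in> strings b k") auto
      then show ?thesis unfolding approx_def
        by (intro allI impI exI[of _ "[]"] exI[of _ 0]) auto
    next
      case True
      then obtain s0 where s0: "s0 \<in> strings b k" "\<eta> s0 > 0" using nn by force
      obtain y where y: "y \<noteq> []" "set y \<subseteq> {..<b}" "\<And>s. cnt y k s > 0 \<Longrightarrow> \<eta> s > 0"
        using cycle_exists[OF c k s0] by blast
      define P where "P = {s\<in>strings b k. cnt y k s > 0}"
      have fP: "finite P" unfolding P_def using finite_strings by simp
      have w0: "cw y k 0 \<in> P"
      proof -
        have "cnt y k (cw y k 0) \<ge> (if cw y k 0 = cw y k 0 then 1 else 0)"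
          unfolding cnt_def using y(1) by (intro member_le_sum) auto
        then show ?thesis unfolding P_def using cw_in_strings[OF y(2,1)] by auto
      qed
      then have Pne: "P \<noteq> {}" by auto
      define c where "c = Min ((\<lambda>s. \<eta> s / cnt y k s) ` P)"
      have "c \<in> (\<lambda>s. \<eta> s / cnt y k s) ` P" unfolding c_def using fP Pne by (intro Min_in) auto
      then obtain sm where sm: "sm \<in> P" "c = \<eta> sm / cnt y k sm" by blast
      have cle: "c \<le> \<eta> s / cnt y k s" if "s \<in> P" for s using fP that by (auto simp: c_def)
      have smpos: "cnt y k sm > 0" "\<eta> sm > 0" using sm(1) y(3) by (auto simp: P_def)
      have cpos: "c > 0" using sm smpos by simp
      define \<eta>' where "\<eta>' s = \<eta> s - c * cnt y k s" for s
      have c': "circ b k \<eta>'"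
        unfolding circ_def
      proof (intro conjI allI impI ballI)
        fix s assume "s \<notin> strings b k"
        then show "\<eta>' s = 0" using off cnt_off[OF y(2)] by (simp add: \<eta>'_def)
      next
        fix s assume s: "s \<in> strings b k"
        show "0 \<le> \<eta>' s"
        proof (cases "s \<in> P")
          case True
          then have "c \<le> \<eta> s / cnt y k s" by (rule cle)
          moreover have "cnt y k s > 0" using True by (simp add: P_def)
          ultimately have "c * cnt y k s \<le> \<eta> s" by (simp add: field_simps)
          then show ?thesis by (simp add: \<eta>'_def)
        next
          case False
          then have "cnt y k s = 0" using s cnt_nonneg[of y k s] by (auto simp: P_def)
          then show ?thesis using nn[OF s] by (simp add: \<eta>'_def)
        qed
      next
        fix v assume v: "v \<in> strings b (k - 1)"
        have cc: "(\<Sum>a<b. cnt y k (a # v)) = (\<Sum>a<b. cnt y k (v @ [a]))"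
          using cnt_circ[OF y(2) k] v by (simp add: strings_def)
        show "(\<Sum>a<b. \<eta>' (a # v)) = (\<Sum>a<b. \<eta>' (v @ [a]))"
          unfolding \<eta>'_def sum_subtractf sum_distrib_left[symmetric] using bal[OF v] cc by simp
      qed
      have sub: "{s\<in>strings b k. \<eta>' s \<noteq> 0} \<subset> {s\<in>strings b k. \<eta> s \<noteq> 0}"
      proof
        show "{s\<in>strings b k. \<eta>' s \<noteq> 0} \<subseteq> {s\<in>strings b k. \<eta> s \<noteq> 0}"
        proof
          fix s assume s: "s \<in> {s\<in>strings b k. \<eta>' s \<noteq> 0}"
          have "\<eta> s \<noteq> 0"
          proof
            assume z: "\<eta> s = 0"
            then have "\<not> cnt y k s > 0" using y(3) by force
            then have "cnt y k s = 0" using cnt_nonneg[of y k s] by simp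
            then show False using s z by (simp add: \<eta>'_def)
          qed
          then show "s \<in> {s\<in>strings b k. \<eta> s \<noteq> 0}" using s by simp
        qed
        have "\<eta>' sm = 0" using sm smpos by (simp add: \<eta>'_def)
        moreover have "sm \<in> {s\<in>strings b k. \<eta> s \<noteq> 0}" using sm(1) smpos by (simp add: P_def)
        ultimately show "{s\<in>strings b k. \<eta>' s \<noteq> 0} \<noteq> {s\<in>strings b k. \<eta> s \<noteq> 0}" by blast
      qed
      have "card {s\<in>strings b k. \<eta>' s \<noteq> 0} < n"
        using psubset_card_mono[OF _ sub] finite_strings H by simp
      then have a1: "approx b k \<eta>'" using less.IH c' by blast
      have a2: "approx b k (\<lambda>s. c * cnt y k s)" using approx_cnt[OF y(2)] cpos by simp
      have "approx b k (\<lambda>s. \<eta>' s + c * cnt y k s)" by (rule approx_add[OF a1 a2])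
      moreover have "(\<lambda>s. \<eta>' s + c * cnt y k s) = \<eta>" by (simp add: \<eta>'_def fun_eq_iff)
      ultimately show ?thesis by simp
    qed
  qed
qed

lemma circ_approx: "k \<ge> 1 \<Longrightarrow> circ b k \<eta> \<Longrightarrow> approx b k \<eta>"
  using decomp_aux by blast

lemma Delta_approx:
  assumes k: "k \<ge> 1" and D: "\<eta> \<in> Delta b k" and ep: "\<epsilon> > 0"
  shows "\<exists>z. z \<noteq> [] \<and> set z \<subseteq> {..<b} \<and> (\<forall>s\<in>strings b k. \<bar>cnt z k s / real (length z) - \<eta> s\<bar> < \<epsilon>)"
proof -
  let ?E = "strings b k"
  have off: "\<And>s. s \<notin> ?E \<Longrightarrow> \<eta> s = 0" and s1: "(\<Sum>s\<in>?E. \<eta> s) = 1" and nn: "\<And>s. s \<in> ?E \<Longrightarrow> 0 \<le> \<eta> s"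
    and bal: "\<And>v. v \<in> strings b (k - 1) \<Longrightarrow> (\<Sum>a<b. \<eta> (a # v)) = (\<Sum>a<b. \<eta> (v @ [a]))"
    using D by (auto simp: Delta_def)
  have c: "circ b k \<eta>" using off nn bal by (simp add: circ_def)
  have a: "approx b k \<eta>" by (rule circ_approx[OF k c])
  define M where "M = real (card ?E)"
  have M0: "M \<ge> 0" by (simp add: M_def)
  define e where "e = min (1 / (2 * M + 2)) (\<epsilon> / (4 * M + 2))"
  have ep0: "e > 0" using ep M0 by (simp add: e_def)
  obtain z t where zt: "set z \<subseteq> {..<b}" "0 \<le> t" "\<forall>s\<in>?E. \<bar>t * cnt z k s - \<eta> s\<bar> < e"
    using a ep0 unfolding approx_def by blast
  have e1: "e \<le> 1 / (2 * M + 2)" "e \<le> \<epsilon> / (4 * M + 2)" by (simp_all add: e_def)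
  define L where "L = real (length z)"
  have sumdiff: "\<bar>t * L - 1\<bar> \<le> M * e"
  proof -
    have "t * L - 1 = (\<Sum>s\<in>?E. t * cnt z k s - \<eta> s)"
      using sum_cnt[OF zt(1), of k] s1 by (simp add: L_def sum_subtractf sum_distrib_left[symmetric])
    then have "\<bar>t * L - 1\<bar> \<le> (\<Sum>s\<in>?E. \<bar>t * cnt z k s - \<eta> s\<bar>)" by (simp add: sum_abs)
    also have "\<dots> \<le> (\<Sum>s\<in>?E. e)" using zt(3) by (intro sum_mono) (simp add: less_imp_le)
    also have "\<dots> = M * e" by (simp add: M_def)
    finally show ?thesis .
  qed
  have Me: "M * e \<le> 1 / 2"
  proof -
    have "M * e \<le> M * (1 / (2 * M + 2))" by (rule mult_left_mono[OF e1(1) M0])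
    also have "\<dots> \<le> 1 / 2" using M0 by (simp add: field_simps)
    finally show ?thesis .
  qed
  have tL: "t * L \<ge> 1 / 2" using sumdiff Me by (simp add: abs_le_iff)
  have Lp: "L > 0"
  proof (rule ccontr)
    assume "\<not> L > 0"
    then have "L = 0" by (simp add: L_def)
    then show False using tL by simp
  qed
  then have zne: "z \<noteq> []" by (auto simp: L_def)
  have "\<bar>cnt z k s / L - \<eta> s\<bar> < \<epsilon>" if s: "s \<in> ?E" for s
  proof -
    have ts: "\<bar>t * cnt z k s - \<eta> s\<bar> < e" using zt(3) s by blast
    have eta1: "\<eta> s \<le> 1"
    proof -
      have "\<eta> s \<le> (\<Sum>s\<in>?E. \<eta> s)" using nn s finite_strings by (intro member_le_sum) auto
      then show ?thesis using s1 by simp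
    qed
    have "1 / (2 * M + 2) \<le> 1" using M0 by (simp add: field_simps)
    then have e_le1: "e \<le> 1" using e1(1) by linarith
    have tc: "0 \<le> t * cnt z k s" "t * cnt z k s \<le> 2" using ts eta1 e_le1 zt(2) cnt_nonneg[of z k s]
      by (auto simp: abs_less_iff)
    have tLp: "t * L > 0" using tL by simp
    have tnz: "t \<noteq> 0" using tLp by auto
    have eqc: "cnt z k s / L = (t * cnt z k s) / (t * L)" using tnz by simp
    have gen: "A / B - A = A * (1 - B) / B" if "B \<noteq> 0" for A B :: real
      using that by (simp add: field_simps)
    have eq2: "(t * cnt z k s) / (t * L) - t * cnt z k s = (t * cnt z k s) * (1 - t * L) / (t * L)"
      by (rule gen) (use tLp in linarith)
    have "cnt z k s / L - t * cnt z k s = (t * cnt z k s) * (1 - t * L) / (t * L)"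
      unfolding eqc by (rule eq2)
    then have "\<bar>cnt z k s / L - t * cnt z k s\<bar> = (t * cnt z k s) * \<bar>1 - t * L\<bar> / (t * L)"
      using tc tLp cnt_nonneg[of z k s] Lp by (simp add: abs_mult abs_divide)
    also have "\<dots> \<le> 2 * (M * e) / (1 / 2)"
    proof -
      have "(t * cnt z k s) * \<bar>1 - t * L\<bar> \<le> 2 * (M * e)"
        using tc sumdiff by (intro mult_mono) (auto simp: abs_minus_commute)
      moreover have a0: "0 \<le> (t * cnt z k s) * \<bar>1 - t * L\<bar>" using tc by simp
      ultimately have "(t * cnt z k s) * \<bar>1 - t * L\<bar> / (t * L) \<le> (t * cnt z k s) * \<bar>1 - t * L\<bar> / (1 / 2)"
        using tL by (intro divide_left_mono) auto
      also have "\<dots> \<le> 2 * (M * e) / (1 / 2)"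
        using \<open>(t * cnt z k s) * \<bar>1 - t * L\<bar> \<le> 2 * (M * e)\<close> by (intro divide_right_mono) auto
      finally show ?thesis .
    qed
    finally have d1: "\<bar>cnt z k s / L - t * cnt z k s\<bar> \<le> 4 * M * e" by simp
    have "4 * M * e + e = (4 * M + 1) * e" by (simp add: algebra_simps)
    also have "\<dots> < (4 * M + 2) * e" using ep0 by simp
    also have "\<dots> \<le> (4 * M + 2) * (\<epsilon> / (4 * M + 2))" using e1(2) M0 by (intro mult_left_mono) auto
    also have "\<dots> = \<epsilon>" using M0 by simp
    finally have "4 * M * e + e < \<epsilon>" .
    then show ?thesis using d1 ts unfolding abs_le_iff abs_less_iff by linarith
  qed
  then show ?thesis using zne zt(1) by (auto simp: L_def)
qed

definition Wd :: "nat \<Rightarrow> real \<Rightarrow> nat \<Rightarrow> nat \<Rightarrow> nat list" where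
  "Wd b x k i = map (\<lambda>j. digits b x (i + j)) [0..<k]"

lemma length_Wd [simp]: "length (Wd b x k i) = k" by (simp add: Wd_def)

lemma card_filter_sum: "finite A \<Longrightarrow> real (card {i\<in>A. Q i}) = (\<Sum>i\<in>A. if Q i then 1 else 0)"
  by (simp add: sum.If_cases Int_def)

lemma match_iff_Wd: "length s = k \<Longrightarrow> (\<forall>j<length s. digits b x (i + j) = s ! j) \<longleftrightarrow> Wd b x k i = s"
  by (auto simp: Wd_def list_eq_iff_nth_eq)

lemma freq_alt:
  assumes "length s = k"
  shows "freq b s n x = (\<Sum>i\<in>{1..n}. if Wd b x k i = s then 1 else 0) / real n"
proof -
  have "{i \<in> {1..n}. \<forall>j<length s. digits b x (i + j) = s ! j} = {i \<in> {1..n}. Wd b x k i = s}"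
    using match_iff_Wd[OF assms] by blast
  moreover have "real (card {i \<in> {1..n}. Wd b x k i = s}) = (\<Sum>i\<in>{1..n}. if Wd b x k i = s then 1 else 0)"
    by (rule card_filter_sum) simp
  ultimately show ?thesis unfolding freq_def by simp
qed

lemma digits_lt: "b \<ge> 2 \<Longrightarrow> 0 < x \<Longrightarrow> x \<le> 1 \<Longrightarrow> digits b x m < b"
  using digits_eq Dd_lt by simp

lemma Wd_in_strings: "b \<ge> 2 \<Longrightarrow> 0 < x \<Longrightarrow> x \<le> 1 \<Longrightarrow> Wd b x k i \<in> strings b k"
  using digits_lt by (auto simp: Wd_def strings_def)

lemma sum_delta_lt: "h < (b::nat) \<Longrightarrow> (\<Sum>a<b. if a = h then 1 else (0::real)) = 1"
proof -
  have "(\<Sum>a<b. if a = h then 1 else (0::real)) = (if h \<in> {..<b} then 1 else 0)"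
    by (rule sum.delta[OF finite_lessThan])
  then show "h < b \<Longrightarrow> ?thesis" by simp
qed

lemma split_hd:
  fixes b :: nat
  assumes "finite A" "\<And>i. i \<in> A \<Longrightarrow> w i \<noteq> [] \<and> hd (w i) < b"
  shows "(\<Sum>a<b. \<Sum>i\<in>A. if w i = a # v then 1 else 0) = (\<Sum>i\<in>A. if tl (w i) = v then 1 else (0::real))"
proof -
  have "(\<Sum>a<b. \<Sum>i\<in>A. if w i = a # v then 1 else (0::real)) = (\<Sum>i\<in>A. \<Sum>a<b. if w i = a # v then 1 else 0)"
    by (rule sum.swap)
  also have "\<dots> = (\<Sum>i\<in>A. if tl (w i) = v then 1 else (0::real))"
  proof (rule sum.cong[OF refl])
    fix i assume i: "i \<in> A"
    have "(\<Sum>a<b. if w i = a # v then 1 else (0::real)) = (\<Sum>a<b. if a = hd (w i) then (if tl (w i) = v then 1 else 0) else 0)"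
    proof (rule sum.cong[OF refl])
      fix a
      have "w i = a # v \<longleftrightarrow> a = hd (w i) \<and> tl (w i) = v" using assms(2)[OF i] by (cases "w i") auto
      then show "(if w i = a # v then 1 else (0::real)) = (if a = hd (w i) then (if tl (w i) = v then 1 else 0) else 0)"
        by auto
    qed
    also have "\<dots> = (if tl (w i) = v then 1 else 0)" using assms(2)[OF i] sum_delta_lt by simp
    finally show "(\<Sum>a<b. if w i = a # v then 1 else (0::real)) = (if tl (w i) = v then 1 else 0)" .
  qed
  finally show ?thesis .
qed

lemma split_last:
  fixes b :: nat
  assumes "finite A" "\<And>i. i \<in> A \<Longrightarrow> w i \<noteq> [] \<and> last (w i) < b"
  shows "(\<Sum>a<b. \<Sum>i\<in>A. if w i = v @ [a] then 1 else 0) = (\<Sum>i\<in>A. if butlast (w i) = v then 1 else (0::real))"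
proof -
  have "(\<Sum>a<b. \<Sum>i\<in>A. if w i = v @ [a] then 1 else (0::real)) = (\<Sum>i\<in>A. \<Sum>a<b. if w i = v @ [a] then 1 else 0)"
    by (rule sum.swap)
  also have "\<dots> = (\<Sum>i\<in>A. if butlast (w i) = v then 1 else (0::real))"
  proof (rule sum.cong[OF refl])
    fix i assume i: "i \<in> A"
    have "(\<Sum>a<b. if w i = v @ [a] then 1 else (0::real)) = (\<Sum>a<b. if a = last (w i) then (if butlast (w i) = v then 1 else 0) else 0)"
    proof (rule sum.cong[OF refl])
      fix a
      have "w i = v @ [a] \<longleftrightarrow> a = last (w i) \<and> butlast (w i) = v" using assms(2)[OF i]
        by (metis append_butlast_last_id butlast_snoc last_snoc)
      then show "(if w i = v @ [a] then 1 else (0::real)) = (if a = last (w i) then (if butlast (w i) = v then 1 else 0) else 0)"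
        by auto
    qed
    also have "\<dots> = (if butlast (w i) = v then 1 else 0)" using assms(2)[OF i] sum_delta_lt by simp
    finally show "(\<Sum>a<b. if w i = v @ [a] then 1 else (0::real)) = (if butlast (w i) = v then 1 else 0)" .
  qed
  finally show ?thesis .
qed

lemma tl_Wd: "tl (Wd b x k i) = Wd b x (k - 1) (Suc i)"
  by (rule nth_equalityI) (auto simp: Wd_def nth_tl)

lemma butlast_Wd: "butlast (Wd b x k i) = Wd b x (k - 1) i"
  by (rule nth_equalityI) (auto simp: Wd_def nth_butlast)

context
  fixes b k :: nat and x :: real
  assumes b: "b \<ge> 2" and k: "k \<ge> 1" and x: "0 < x" "x \<le> 1"
begin

lemma freq_sum1:
  assumes n: "n \<ge> 1"
  shows "(\<Sum>s\<in>strings b k. freq b s n x) = 1"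
proof -
  have "(\<Sum>s\<in>strings b k. freq b s n x) = (\<Sum>s\<in>strings b k. (\<Sum>i\<in>{1..n}. if Wd b x k i = s then 1 else 0)) / real n"
    by (simp add: freq_alt strings_def sum_divide_distrib)
  also have "(\<Sum>s\<in>strings b k. (\<Sum>i\<in>{1..n}. if Wd b x k i = s then 1 else 0)) = real (card {1..n})"
    by (rule sum_fibres) (use Wd_in_strings[OF b x] finite_strings in auto)
  finally show ?thesis using n by simp
qed

lemma freq_bal:
  assumes n: "n \<ge> 1" and v: "v \<in> strings b (k - 1)"
  shows "\<bar>(\<Sum>a<b. freq b (a # v) n x) - (\<Sum>a<b. freq b (v @ [a]) n x)\<bar> \<le> 1 / real n"
proof -
  have lv: "length v = k - 1" using v by (simp add: strings_def)
  have l1: "length (a # v) = k" for a using lv k by simp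
  have l2: "length (v @ [a]) = k" for a using lv k by simp
  have ne: "Wd b x k i \<noteq> []" for i using k by (metis length_Wd list.size(3) not_one_le_zero)
  have hb: "hd (Wd b x k i) < b" for i
    using hd_in_set[OF ne[of i]] Wd_in_strings[OF b x, of k i] by (auto simp: strings_def)
  have lb: "last (Wd b x k i) < b" for i
    using last_in_set[OF ne[of i]] Wd_in_strings[OF b x, of k i] by (auto simp: strings_def)
  define g where "g i = (if Wd b x (k - 1) i = v then 1 else (0::real))" for i
  have A: "(\<Sum>a<b. freq b (a # v) n x) = (\<Sum>i\<in>{1..n}. g (Suc i)) / real n"
  proof -
    have "(\<Sum>a<b. freq b (a # v) n x) = (\<Sum>a<b. \<Sum>i\<in>{1..n}. if Wd b x k i = a # v then 1 else 0) / real n"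
      by (simp add: freq_alt[OF l1] sum_divide_distrib)
    also have "(\<Sum>a<b. \<Sum>i\<in>{1..n}. if Wd b x k i = a # v then 1 else 0) = (\<Sum>i\<in>{1..n}. if tl (Wd b x k i) = v then 1 else (0::real))"
      by (rule split_hd) (use ne hb in auto)
    finally show ?thesis by (simp add: tl_Wd g_def)
  qed
  have B: "(\<Sum>a<b. freq b (v @ [a]) n x) = (\<Sum>i\<in>{1..n}. g i) / real n"
  proof -
    have "(\<Sum>a<b. freq b (v @ [a]) n x) = (\<Sum>a<b. \<Sum>i\<in>{1..n}. if Wd b x k i = v @ [a] then 1 else 0) / real n"
      by (simp add: freq_alt[OF l2] sum_divide_distrib)
    also have "(\<Sum>a<b. \<Sum>i\<in>{1..n}. if Wd b x k i = v @ [a] then 1 else 0) = (\<Sum>i\<in>{1..n}. if butlast (Wd b x k i) = v then 1 else (0::real))"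
      by (rule split_last) (use ne lb in auto)
    finally show ?thesis by (simp add: butlast_Wd g_def)
  qed
  have tel: "(\<Sum>i\<in>{1..n}. g (Suc i)) - (\<Sum>i\<in>{1..n}. g i) = g (Suc n) - g 1"
    using sum_Suc_diff[of 1 n g] n by (simp add: sum_subtractf)
  have "\<bar>g (Suc n) - g 1\<bar> \<le> 1" by (simp add: g_def)
  then have "\<bar>(\<Sum>i\<in>{1..n}. g (Suc i)) - (\<Sum>i\<in>{1..n}. g i)\<bar> \<le> 1" using tel by simp
  then have "\<bar>((\<Sum>i\<in>{1..n}. g (Suc i)) - (\<Sum>i\<in>{1..n}. g i)) / real n\<bar> \<le> 1 / real n"
    using n by (simp add: abs_divide divide_right_mono)
  then show ?thesis unfolding A B by (simp add: diff_divide_distrib)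
qed

lemma Gamma_aux:
  assumes G: "\<eta> \<in> Gamma b k x I" and I: "is_ideal I"
    and g: "continuous_on UNIV g" and Op: "open Op" "g \<eta> \<in> Op"
    and fin: "finite {n. n \<ge> 1 \<and> g (freq_vec b k n x) \<in> Op}"
  shows False
proof -
  have U: "open (g -` Op)" by (rule open_vimage[OF Op(1) g])
  have "{n. n \<ge> 1 \<and> freq_vec b k n x \<in> g -` Op} \<notin> I" using G U Op(2) unfolding Gamma_def by blast
  moreover have "{n. n \<ge> 1 \<and> freq_vec b k n x \<in> g -` Op} \<in> I" using fin I unfolding is_ideal_def by simp
  ultimately show False by blast
qed

lemma Gamma_sub_Delta:
  assumes I: "is_ideal I"
  shows "Gamma b k x I \<subseteq> Delta b k"
proof
  fix \<eta> assume G: "\<eta> \<in> Gamma b k x I"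
  have c1: "continuous_on UNIV (\<lambda>p::nat list \<Rightarrow> real. p s)" for s by simp
  have off: "\<eta> s = 0" if s: "s \<notin> strings b k" for s
  proof (rule ccontr)
    assume "\<eta> s \<noteq> 0"
    show False
      by (rule Gamma_aux[OF G I c1[of s], of "-{0}"]) (use \<open>\<eta> s \<noteq> 0\<close> s in \<open>auto simp: freq_vec_def\<close>)
  qed
  have nn: "0 \<le> \<eta> s" if s: "s \<in> strings b k" for s
  proof (rule ccontr)
    assume "\<not> 0 \<le> \<eta> s"
    have fr: "freq b s n x \<ge> 0" for n by (simp add: freq_def)
    have e: "{n. n \<ge> 1 \<and> freq_vec b k n x s \<in> {..<0}} = {}"
      using fr s by (auto simp: freq_vec_def leD)
    have fin: "finite {n. n \<ge> 1 \<and> freq_vec b k n x s \<in> {..<0}}" unfolding e by simp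
    show False
      by (rule Gamma_aux[OF G I c1[of s] _ _ fin]) (use \<open>\<not> 0 \<le> \<eta> s\<close> in auto)
  qed
  have sum1: "(\<Sum>s\<in>strings b k. \<eta> s) = 1"
  proof (rule ccontr)
    assume ne: "(\<Sum>s\<in>strings b k. \<eta> s) \<noteq> 1"
    have cs: "continuous_on UNIV (\<lambda>p::nat list \<Rightarrow> real. \<Sum>s\<in>strings b k. p s)"
      by (intro continuous_intros) simp
    have "(\<Sum>s\<in>strings b k. freq_vec b k n x s) = 1" if "n \<ge> 1" for n
      using freq_sum1[OF that] by (simp add: freq_vec_def)
    then have e: "{n. n \<ge> 1 \<and> (\<Sum>s\<in>strings b k. freq_vec b k n x s) \<in> -{1}} = {}" by auto
    have fin: "finite {n. n \<ge> 1 \<and> (\<Sum>s\<in>strings b k. freq_vec b k n x s) \<in> -{1}}" unfolding e by simp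
    show False
      by (rule Gamma_aux[OF G I cs _ _ fin]) (use ne in auto)
  qed
  have bal: "(\<Sum>a<b. \<eta> (a # v)) = (\<Sum>a<b. \<eta> (v @ [a]))" if v: "v \<in> strings b (k - 1)" for v
  proof (rule ccontr)
    define gv where "gv p = (\<Sum>a<b. p (a # v)) - (\<Sum>a<b. p (v @ [a]))" for p :: "nat list \<Rightarrow> real"
    assume "(\<Sum>a<b. \<eta> (a # v)) \<noteq> (\<Sum>a<b. \<eta> (v @ [a]))"
    then have dp: "\<bar>gv \<eta>\<bar> > 0" by (simp add: gv_def)
    define \<delta> where "\<delta> = \<bar>gv \<eta>\<bar>"
    have cs: "continuous_on UNIV gv" unfolding gv_def by (intro continuous_intros) simp_all
    have gen: "open {r::real. a < \<bar>r\<bar>}" for a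
      using open_vimage[OF open_greaterThan[of a] continuous_on_rabs[OF continuous_on_id]]
      by (simp add: vimage_def greaterThan_def)
    have Op: "open {r::real. \<delta> / 2 < \<bar>r\<bar>}" by (rule gen)
    have lvk: "a # v \<in> strings b k" "v @ [a] \<in> strings b k" if "a < b" for a
      using v k that by (auto simp: strings_def)
    have fv: "gv (freq_vec b k n x) = (\<Sum>a<b. freq b (a # v) n x) - (\<Sum>a<b. freq b (v @ [a]) n x)" for n
      unfolding gv_def freq_vec_def using lvk by simp
    obtain N :: nat where N: "2 / \<delta> < real N" using reals_Archimedean2 by blast
    have "{n. n \<ge> 1 \<and> gv (freq_vec b k n x) \<in> {r. \<delta> / 2 < \<bar>r\<bar>}} \<subseteq> {..N}"
    proof
      fix n assume "n \<in> {n. n \<ge> 1 \<and> gv (freq_vec b k n x) \<in> {r. \<delta> / 2 < \<bar>r\<bar>}}"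
      then have n: "n \<ge> 1" "\<delta> / 2 < \<bar>gv (freq_vec b k n x)\<bar>" by auto
      then have "\<delta> / 2 < 1 / real n" using freq_bal[OF n(1) v] fv[of n] by linarith
      then have "real n < 2 / \<delta>" using n(1) dp by (simp add: \<delta>_def field_simps)
      then show "n \<in> {..N}" using N by simp
    qed
    then have "finite {n. n \<ge> 1 \<and> gv (freq_vec b k n x) \<in> {r. \<delta> / 2 < \<bar>r\<bar>}}" by (rule finite_subset) simp
    then show False
      by (intro Gamma_aux[OF G I cs Op]) (use dp in \<open>auto simp: \<delta>_def\<close>)
  qed
  show "\<eta> \<in> Delta b k" unfolding Delta_def using off nn sum1 bal by blast
qed

end

definition cyl :: "bool list \<Rightarrow> (nat \<Rightarrow> bool) set" where
  "cyl \<sigma> = {f. \<forall>i<length \<sigma>. f i = \<sigma> ! i}"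

lemma cyl_append_sub: "cyl (xs @ ys) \<subseteq> cyl xs"
  by (auto simp: cyl_def nth_append)

lemma cyl_open: "open (cyl \<sigma>)"
proof -
  have "cyl \<sigma> = {g. \<forall>i<length \<sigma>. g i = (\<lambda>i. \<sigma> ! i) i}" by (simp add: cyl_def)
  then show ?thesis using open_cantor_cyl_set by simp
qed

lemma cyl_ne: "cyl \<sigma> \<noteq> {}"
proof -
  have "(\<lambda>i. if i < length \<sigma> then \<sigma> ! i else False) \<in> cyl \<sigma>" by (simp add: cyl_def)
  then show ?thesis by blast
qed

lemma ext1:
  assumes N: "nowhere_dense_in (euclidean :: (nat \<Rightarrow> bool) topology) N"
  shows "\<exists>\<tau>. cyl (\<sigma> @ \<tau>) \<inter> N = {}"
proof -
  have "openin euclidean (cyl \<sigma>)" by (rule open_openin[THEN iffD1, OF cyl_open])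
  from nowhere_dense_D[OF N this cyl_ne]
  obtain V' where V': "openin euclidean V'" "V' \<noteq> {}" "V' \<subseteq> cyl \<sigma>" "V' \<inter> N = {}" by blast
  obtain f where f: "f \<in> V'" using V'(2) by blast
  obtain M where M: "\<forall>g. (\<forall>i<M. g i = f i) \<longrightarrow> g \<in> V'"
    using open_cantor_cyl[OF open_openin[THEN iffD2, OF V'(1)] f] by blast
  define M' where "M' = max M (length \<sigma>)"
  define \<tau> where "\<tau> = map f [length \<sigma>..<M']"
  have fs: "f i = \<sigma> ! i" if "i < length \<sigma>" for i using f V'(3) that by (auto simp: cyl_def)
  have "cyl (\<sigma> @ \<tau>) \<subseteq> V'"
  proof
    fix g assume g: "g \<in> cyl (\<sigma> @ \<tau>)"
    have "g i = f i" if i: "i < M" for i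
    proof (cases "i < length \<sigma>")
      case True
      then have "g i = (\<sigma> @ \<tau>) ! i" using g by (auto simp: cyl_def)
      then show ?thesis using True fs by (simp add: nth_append)
    next
      case False
      have iM: "i < M'" using i by (simp add: M'_def)
      then have "i < length (\<sigma> @ \<tau>)" by (simp add: \<tau>_def M'_def)
      then have "g i = (\<sigma> @ \<tau>) ! i" using g by (auto simp: cyl_def)
      also have "\<dots> = \<tau> ! (i - length \<sigma>)" using False by (simp add: nth_append)
      also have "\<dots> = f i" using False iM by (simp add: \<tau>_def)
      finally show ?thesis .
    qed
    then show "g \<in> V'" using M by blast
  qed
  then show ?thesis using V'(4) by blast
qed

lemma block_exists:
  assumes ND: "\<And>i. nowhere_dense_in (euclidean :: (nat \<Rightarrow> bool) topology) (C i)"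
    and P: "finite P"
  shows "\<exists>s. s \<noteq> [] \<and> (\<forall>(\<sigma>, i)\<in>P. cyl (\<sigma> @ s) \<inter> C i = {})"
proof -
  have "\<exists>s. \<forall>(\<sigma>, i)\<in>P. cyl (\<sigma> @ s) \<inter> C i = {}"
    using P
  proof (induction rule: finite_induct)
    case empty then show ?case by simp
  next
    case (insert a P)
    then obtain s where s: "\<forall>(\<sigma>, i)\<in>P. cyl (\<sigma> @ s) \<inter> C i = {}" by blast
    obtain \<sigma>0 i0 where a: "a = (\<sigma>0, i0)" by (cases a)
    obtain \<tau> where \<tau>: "cyl ((\<sigma>0 @ s) @ \<tau>) \<inter> C i0 = {}" using ext1[OF ND[of i0]] by blast
    have "\<forall>(\<sigma>, i)\<in>insert a P. cyl (\<sigma> @ (s @ \<tau>)) \<inter> C i = {}"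
    proof
      fix x assume "x \<in> insert a P"
      then show "case x of (\<sigma>, i) \<Rightarrow> cyl (\<sigma> @ (s @ \<tau>)) \<inter> C i = {}"
      proof
        assume "x = a" then show ?thesis using \<tau> a by simp
      next
        assume x: "x \<in> P"
        obtain \<sigma> i where xe: "x = (\<sigma>, i)" by (cases x)
        have "cyl (\<sigma> @ s @ \<tau>) \<subseteq> cyl (\<sigma> @ s)" using cyl_append_sub[of "\<sigma> @ s" \<tau>] by simp
        then show ?thesis using s x xe by blast
      qed
    qed
    then show ?case by blast
  qed
  then obtain s where s: "\<forall>(\<sigma>, i)\<in>P. cyl (\<sigma> @ s) \<inter> C i = {}" by blast
  have "\<forall>(\<sigma>, i)\<in>P. cyl (\<sigma> @ (s @ [False])) \<inter> C i = {}"
  proof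
    fix x assume x: "x \<in> P"
    obtain \<sigma> i where xe: "x = (\<sigma>, i)" by (cases x)
    have "cyl (\<sigma> @ s @ [False]) \<subseteq> cyl (\<sigma> @ s)" using cyl_append_sub[of "\<sigma> @ s" "[False]"] by simp
    then show "case x of (\<sigma>, i) \<Rightarrow> cyl (\<sigma> @ (s @ [False])) \<inter> C i = {}" using s x xe by blast
  qed
  then show ?thesis by blast
qed

lemma meager_ideal_blocks:
  assumes I: "is_ideal I" and M: "meager_ideal I"
  shows "\<exists>F :: nat \<Rightarrow> nat set. (\<forall>j. finite (F j)) \<and> (\<forall>j. \<forall>n\<in>F j. n > j) \<and> (\<forall>A\<in>I. \<exists>m. \<forall>j\<ge>m. \<not> F j \<subseteq> A)"
proof -
  define chr where "chr A = (\<lambda>n. n \<in> A)" for A :: "nat set"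
  have "meager_in euclidean (chr ` I)" using M by (simp add: meager_ideal_def chr_def)
  then obtain FF where FF: "countable FF" "\<forall>N\<in>FF. nowhere_dense_in euclidean N" "chr ` I \<subseteq> \<Union>FF"
    unfolding meager_in_def by blast
  have e: "{} \<in> I" using I by (simp add: is_ideal_def)
  then have "FF \<noteq> {}" using FF(3) by blast
  define C where "C i = from_nat_into FF i" for i
  have rC: "range C = FF" using range_from_nat_into[OF \<open>FF \<noteq> {}\<close> FF(1)] by (simp add: C_def)
  have ND: "nowhere_dense_in euclidean (C i)" for i
  proof -
    have "C i \<in> range C" by (rule rangeI)
    then have "C i \<in> FF" by (simp only: rC)
    then show ?thesis using FF(2) by blast
  qed
  have cov: "\<exists>i. chr A \<in> C i" if "A \<in> I" for A
  proof -
    have "chr A \<in> chr ` I" using that by (rule imageI)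
    then have "chr A \<in> \<Union>FF" by (rule subsetD[OF FF(3)])
    then obtain N where N: "N \<in> FF" "chr A \<in> N" by (rule UnionE)
    then have "N \<in> range C" by (simp only: rC)
    then obtain i where "N = C i" by (rule rangeE)
    then show ?thesis using N(2) by blast
  qed
  define good where "good n j s \<longleftrightarrow> s \<noteq> [] \<and> (\<forall>\<sigma>. length \<sigma> = n \<longrightarrow> (\<forall>i\<le>j. cyl (\<sigma> @ s) \<inter> C i = {}))" for n j s
  have gex: "\<exists>s. good n j s" for n j
  proof -
    have f1: "finite {\<sigma>::bool list. length \<sigma> = n}"
      using finite_lists_length_eq[of "UNIV :: bool set" n] by simp
    have fin: "finite ({\<sigma>::bool list. length \<sigma> = n} \<times> {..j})"
      by (rule finite_cartesian_product[OF f1]) simp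
    obtain s where s: "s \<noteq> []" "\<forall>(\<sigma>, i)\<in>{\<sigma>::bool list. length \<sigma> = n} \<times> {..j}. cyl (\<sigma> @ s) \<inter> C i = {}"
      using block_exists[of C, OF ND fin] by (elim exE conjE) (rule that)
    have "\<forall>\<sigma>. length \<sigma> = n \<longrightarrow> (\<forall>i\<le>j. cyl (\<sigma> @ s) \<inter> C i = {})"
    proof (intro allI impI)
      fix \<sigma> :: "bool list" and i assume "length \<sigma> = n" "i \<le> j"
      then have "(\<sigma>, i) \<in> {\<sigma>::bool list. length \<sigma> = n} \<times> {..j}" by simp
      then show "cyl (\<sigma> @ s) \<inter> C i = {}" using s(2) by fast
    qed
    then show ?thesis unfolding good_def using s(1) by blast
  qed
  define blkf where "blkf n j = (SOME s. good n j s)" for n j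
  have blkf: "good n j (blkf n j)" for n j unfolding blkf_def by (rule someI_ex[OF gex])
  define pos where "pos = rec_nat (1::nat) (\<lambda>j p. p + length (blkf p j))"
  have pos0: "pos 0 = 1" by (simp add: pos_def)
  define blk where "blk j = blkf (pos j) j" for j
  have posS: "pos (Suc j) = pos j + length (blk j)" for j by (simp add: pos_def blk_def)
  have blk: "good (pos j) j (blk j)" for j by (simp add: blk_def blkf)
  have smono: "strict_mono pos"
  proof (rule strict_mono_Suc_iff[THEN iffD2], intro allI)
    fix j have "blk j \<noteq> []" using blk[of j] by (simp add: good_def)
    then show "pos j < pos (Suc j)" by (simp add: posS)
  qed
  have posj: "pos j > j" for j
  proof (induction j)
    case 0 then show ?case by (simp add: pos0)
  next
    case (Suc j)
    have "pos j < pos (Suc j)" using smono by (simp add: strict_mono_def)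
    then show ?case using Suc by linarith
  qed
  define F where "F j = {pos j + t | t. t < length (blk j) \<and> blk j ! t}" for j
  have Ffin: "finite (F j)" for j
  proof -
    have "F j \<subseteq> (\<lambda>t. pos j + t) ` {..<length (blk j)}" by (auto simp: F_def)
    then show ?thesis by (rule finite_subset) simp
  qed
  have Fgt: "\<forall>n\<in>F j. n > j" for j using posj[of j] by (auto simp: F_def)
  have Fint: "pos j \<le> n \<and> n < pos (Suc j)" if "n \<in> F j" for n j using that by (auto simp: F_def posS)
  have uniq: "j = j'" if "pos j \<le> n" "n < pos (Suc j)" "pos j' \<le> n" "n < pos (Suc j')" for n j j'
  proof (rule ccontr)
    assume "j \<noteq> j'"
    then consider "j < j'" | "j' < j" by linarith
    then show False
    proof cases
      case 1 then have "pos (Suc j) \<le> pos j'" using smono by (simp add: strict_mono_less_eq Suc_le_eq)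
      then show False using that by linarith
    next
      case 2 then have "pos (Suc j') \<le> pos j" using smono by (simp add: strict_mono_less_eq Suc_le_eq)
      then show False using that by linarith
    qed
  qed
  define X where "X = (\<Union>j. F j)"
  have main: "\<exists>m. \<forall>j\<ge>m. \<not> F j \<subseteq> A" if A: "A \<in> I" for A
  proof (rule ccontr)
    assume "\<not> (\<exists>m. \<forall>j\<ge>m. \<not> F j \<subseteq> A)"
    then have inf: "\<forall>m. \<exists>j\<ge>m. F j \<subseteq> A" by blast
    define A' where "A' = A \<inter> X"
    have sub: "\<forall>A\<in>I. \<forall>B. B \<subseteq> A \<longrightarrow> B \<in> I" using I by (simp add: is_ideal_def)
    have "A' \<subseteq> A" by (simp add: A'_def)
    then have "A' \<in> I" using sub A by blast
    then obtain i where i: "chr A' \<in> C i" using cov by blast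
    obtain j where j: "j \<ge> i" "F j \<subseteq> A" using inf by blast
    define \<sigma> where "\<sigma> = map (chr A') [0..<pos j]"
    have "chr A' \<in> cyl (\<sigma> @ blk j)"
      unfolding cyl_def
    proof (intro CollectI allI impI)
      fix t assume t: "t < length (\<sigma> @ blk j)"
      show "chr A' t = (\<sigma> @ blk j) ! t"
      proof (cases "t < pos j")
        case True then show ?thesis by (simp add: \<sigma>_def nth_append)
      next
        case False
        define u where "u = t - pos j"
        have tu: "t = pos j + u" using False by (simp add: u_def)
        have ul: "u < length (blk j)" using t False by (simp add: \<sigma>_def u_def)
        have rhs: "(\<sigma> @ blk j) ! t = blk j ! u" using False by (simp add: \<sigma>_def nth_append u_def)
        have "t \<in> A' \<longleftrightarrow> blk j ! u"
        proof
          assume tA: "t \<in> A'"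
          then obtain j' where j': "t \<in> F j'" by (auto simp: A'_def X_def)
          have "pos j \<le> t" "t < pos (Suc j)" using tu ul by (simp_all add: posS)
          then have "j = j'" using Fint[OF j'] by (intro uniq[of j t j']) auto
          then have "j' = j" by simp
          then obtain u' where "t = pos j + u'" "u' < length (blk j)" "blk j ! u'" using j' by (auto simp: F_def)
          then show "blk j ! u" using tu by simp
        next
          assume "blk j ! u"
          then have "t \<in> F j" using tu ul by (auto simp: F_def)
          then show "t \<in> A'" using j(2) by (auto simp: A'_def X_def)
        qed
        then show ?thesis using rhs by (simp add: chr_def)
      qed
    qed
    moreover have "length \<sigma> = pos j" by (simp add: \<sigma>_def)
    then have "cyl (\<sigma> @ blk j) \<inter> C i = {}" using blk[of j] j(1) by (simp add: good_def)
    ultimately show False using i by blast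
  qed
  show ?thesis using Ffin Fgt main by blast
qed

definition Kv :: "nat \<Rightarrow> (nat \<Rightarrow> nat) \<Rightarrow> nat \<Rightarrow> nat" where
  "Kv b v = rec_nat 0 (\<lambda>i K. b * K + v (Suc i))"

lemma Kv_0 [simp]: "Kv b v 0 = 0" by (simp add: Kv_def)
lemma Kv_Suc [simp]: "Kv b v (Suc i) = b * Kv b v i + v (Suc i)" by (simp add: Kv_def)

lemma Kv_lt:
  assumes "b \<ge> 2" "\<And>i. 1 \<le> i \<Longrightarrow> i \<le> M \<Longrightarrow> v i < b" "i \<le> M"
  shows "Kv b v i < b ^ i"
  using assms(3)
proof (induction i)
  case 0 then show ?case by simp
next
  case (Suc i)
  have "v (Suc i) < b" using assms(2) Suc.prems by simp
  then have "Kv b v (Suc i) < b * Kv b v i + b" by simp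
  also have "\<dots> = b * (Kv b v i + 1)" by (simp add: algebra_simps)
  also have "\<dots> \<le> b * b ^ i" using Suc by (intro mult_left_mono) auto
  finally show ?case by simp
qed

context
  fixes b :: nat and v :: "nat \<Rightarrow> nat" and M :: nat
  assumes b: "b \<ge> 2" and vb: "\<And>i. 1 \<le> i \<Longrightarrow> i \<le> M \<Longrightarrow> v i < b"
begin

definition lo :: "nat \<Rightarrow> real" where "lo i = real (Kv b v i) / real b ^ i"
definition hi :: "nat \<Rightarrow> real" where "hi i = (real (Kv b v i) + 1) / real b ^ i"

lemma lo_mono: "i \<le> i' \<Longrightarrow> lo i \<le> lo i'"
proof (induction i' rule: dec_induct)
  case (step n)
  have bp: "real b > 0" using b by simp
  have "real (Kv b v n) / real b ^ n \<le> real (Kv b v (Suc n)) / real b ^ Suc n"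
  proof -
    have "real b * real (Kv b v n) \<le> real (Kv b v (Suc n))" by simp
    then show ?thesis using bp by (simp add: field_simps)
  qed
  then show ?case using step by (simp add: lo_def)
qed simp

lemma hi_mono: "i \<le> i' \<Longrightarrow> i' \<le> M \<Longrightarrow> hi i' \<le> hi i"
proof (induction i' rule: dec_induct)
  case (step n)
  have bp: "real b > 0" using b by simp
  have "v (Suc n) < b" using vb step by simp
  then have "real (v (Suc n)) + 1 \<le> real b" by linarith
  then have A: "real (Kv b v (Suc n)) + 1 \<le> real b * (real (Kv b v n) + 1)" by (simp add: algebra_simps)
  have "(real (Kv b v (Suc n)) + 1) / real b ^ Suc n \<le> (real b * (real (Kv b v n) + 1)) / real b ^ Suc n"
    by (rule divide_right_mono[OF A]) simp
  also have "\<dots> = (real (Kv b v n) + 1) / real b ^ n" using bp by simp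
  finally have "(real (Kv b v (Suc n)) + 1) / real b ^ Suc n \<le> (real (Kv b v n) + 1) / real b ^ n" .
  then show ?case using step by (simp add: hi_def)
qed simp

lemma hi_lo: "hi i - lo i = 1 / real b ^ i" by (simp add: hi_def lo_def add_divide_distrib)

lemma lo_ge0: "lo i \<ge> 0" by (simp add: lo_def)

lemma hi_le1: "i \<le> M \<Longrightarrow> hi i \<le> 1"
proof -
  assume i: "i \<le> M"
  have "Kv b v i < b ^ i" using Kv_lt[where b=b and M=M and v=v and i=i, OF b vb i] by blast
  then have "real (Kv b v i) + 1 \<le> real b ^ i" by (metis Suc_leI of_nat_Suc of_nat_le_iff of_nat_power add.commute)
  then show ?thesis using b by (simp add: hi_def)
qed

lemma cyl_digits:
  assumes x: "lo M < x" "x < hi M" and i: "1 \<le> i" "i \<le> M"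
  shows "digits b x i = v i"
proof -
  have x01: "0 < x" "x \<le> 1" using x lo_ge0[of M] hi_le1[of M] by auto
  have bp: "real b > 0" using b by simp
  have K: "Kd b x i' = int (Kv b v i')" if "i' \<le> M" for i'
  proof -
    have "lo i' \<le> lo M" by (rule lo_mono[OF that])
    moreover have "hi M \<le> hi i'" by (rule hi_mono[OF that order_refl])
    ultimately have "lo i' < x" "x < hi i'" using x by auto
    then have "real (Kv b v i') < x * real b ^ i'" "x * real b ^ i' < real (Kv b v i') + 1"
      using bp by (simp_all add: lo_def hi_def field_simps)
    then have "\<lceil>x * real b ^ i'\<rceil> = int (Kv b v i') + 1" by (intro ceiling_unique) auto
    then show ?thesis by (simp add: Kd_def)
  qed
  obtain i0 where i0: "i = Suc i0" using i by (cases i) auto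
  have "Dd b x i = nat (Kd b x (Suc i0) - int b * Kd b x i0)" by (simp add: Dd_def i0)
  also have "\<dots> = v i" using K[of "Suc i0"] K[of i0] i i0 by simp
  finally show ?thesis using digits_eq[OF b x01] by simp
qed

end

lemma Kv_prefix:
  assumes b: "b \<ge> 2" and c: "0 < c" "c \<le> 1" and v: "\<And>i. 1 \<le> i \<Longrightarrow> i \<le> L \<Longrightarrow> v i = digits b c i"
  shows "i \<le> L \<Longrightarrow> int (Kv b v i) = Kd b c i"
proof (induction i)
  case 0 then show ?case using Kd_0[OF c] by simp
next
  case (Suc i)
  have "v (Suc i) = Dd b c (Suc i)" using v[of "Suc i"] Suc.prems digits_eq[OF b c] by simp
  then show ?case using Suc Kd_Suc[OF b, of c i] by simp
qed

lemma sum_split_prefix: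
  fixes g :: "nat \<Rightarrow> real"
  assumes "L \<le> n"
  shows "(\<Sum>i\<in>{1..n}. g i) = (\<Sum>i\<in>{1..L}. g i) + (\<Sum>t<n - L. g (L + 1 + t))"
proof -
  obtain d where n: "n = L + d" using assms le_Suc_ex by blast
  have "(\<Sum>i\<in>{1..L + d}. g i) = (\<Sum>i\<in>{1..L}. g i) + (\<Sum>t<d. g (L + 1 + t))"
    by (induction d) (simp_all add: add.commute add.left_commute)
  then show ?thesis by (simp add: n)
qed

lemma freq_periodic:
  assumes b: "b \<ge> 2" and x: "0 < x" "x \<le> 1" and z: "z \<noteq> []"
    and dig: "\<And>t. L + 1 + t \<le> M \<Longrightarrow> digits b x (L + 1 + t) = z ! (t mod length z)"
    and n: "L \<le> n" "n + k \<le> M + 1" "n \<ge> 1" and s: "length s = k"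
  shows "\<bar>freq b s n x - cnt z k s / real (length z)\<bar> \<le> (2 * real L + real (length z)) / real n"
proof -
  define p where "p = length z"
  have pp: "p > 0" using z by (simp add: p_def)
  define g where "g i = (if Wd b x k i = s then 1 else (0::real))" for i
  have W: "Wd b x k (L + 1 + t) = cw z k t" if t: "t < n - L" for t
  proof (rule nth_equalityI)
    fix j assume "j < length (Wd b x k (L + 1 + t))"
    then have j: "j < k" by simp
    have "L + 1 + (t + j) \<le> M" using t j n by linarith
    then have "digits b x (L + 1 + (t + j)) = z ! ((t + j) mod length z)" by (rule dig)
    then show "Wd b x k (L + 1 + t) ! j = cw z k t ! j" using j by (simp add: Wd_def nth_cw add.assoc)
  qed simp
  define S where "S = cnt z k s"
  have S0: "0 \<le> S" and Sp: "S \<le> real p" using cnt_nonneg cnt_le by (auto simp: S_def p_def)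
  have cnt_eq: "(\<Sum>i\<in>{1..n}. g i) = (\<Sum>i\<in>{1..L}. g i) + (\<Sum>t<n - L. if cw z k t = s then 1 else 0)"
    using sum_split_prefix[OF n(1), of g] W by (simp add: g_def)
  have P1: "0 \<le> (\<Sum>i\<in>{1..L}. g i)" "(\<Sum>i\<in>{1..L}. g i) \<le> real L"
  proof -
    show "0 \<le> (\<Sum>i\<in>{1..L}. g i)" by (simp add: g_def sum_nonneg)
    have "(\<Sum>i\<in>{1..L}. g i) \<le> (\<Sum>i\<in>{1..L}. 1)" by (intro sum_mono) (simp add: g_def)
    then show "(\<Sum>i\<in>{1..L}. g i) \<le> real L" by simp
  qed
  have P2: "\<bar>(\<Sum>t<n - L. if cw z k t = s then 1 else (0::real)) - real (n - L) * S / real p\<bar> \<le> S"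
    unfolding S_def cnt_def p_def
    by (rule sum_periodic_approx) (use cw_periodic pp p_def in auto)
  have nL: "real (n - L) = real n - real L" using n(1) by simp
  have SL: "real L * S / real p \<le> real L"
  proof -
    have "S / real p \<le> 1" using Sp pp by simp
    then have "real L * (S / real p) \<le> real L * 1" by (intro mult_left_mono) auto
    then show ?thesis by simp
  qed
  have SL0: "0 \<le> real L * S / real p" using S0 by simp
  have tot: "\<bar>(\<Sum>i\<in>{1..n}. g i) - real n * S / real p\<bar> \<le> 2 * real L + real p"
  proof -
    have rn: "real n = real (n - L) + real L" using n(1) by simp
    have e: "real n * S / real p = real (n - L) * S / real p + real L * S / real p"
      by (subst rn) (simp add: distrib_right add_divide_distrib)
    show ?thesis using cnt_eq P1 P2 SL SL0 Sp unfolding e abs_le_iff by linarith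
  qed
  have "freq b s n x = (\<Sum>i\<in>{1..n}. g i) / real n" using freq_alt[OF s] by (simp add: g_def)
  then have "freq b s n x - S / real p = ((\<Sum>i\<in>{1..n}. g i) - real n * S / real p) / real n"
    using n(3) by (simp add: field_simps)
  then have "\<bar>freq b s n x - S / real p\<bar> = \<bar>(\<Sum>i\<in>{1..n}. g i) - real n * S / real p\<bar> / real n"
    by (simp add: abs_divide)
  also have "\<dots> \<le> (2 * real L + real p) / real n" using tot n(3) by (simp add: divide_right_mono)
  finally show ?thesis by (simp add: S_def p_def)
qed

definition Hs :: "nat \<Rightarrow> nat \<Rightarrow> nat list \<Rightarrow> nat \<Rightarrow> real \<Rightarrow> nat set" where
  "Hs b k z r x = {n. n \<ge> 1 \<and> (\<forall>s\<in>strings b k. \<bar>freq b s n x - cnt z k s / real (length z)\<bar> < 1 / (real r + 1))}"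

definition Bs :: "(nat \<Rightarrow> nat set) \<Rightarrow> nat \<Rightarrow> nat \<Rightarrow> nat list \<Rightarrow> nat \<Rightarrow> nat \<Rightarrow> real set" where
  "Bs F b k z r m = {x \<in> {0<..1}. \<forall>j\<ge>m. \<not> F j \<subseteq> Hs b k z r x}"

lemma Bs_nowhere_dense:
  assumes b: "b \<ge> 2" and k: "k \<ge> 1" and z: "z \<noteq> []" "set z \<subseteq> {..<b}"
    and Ffin: "\<And>j. finite (F j)" and Fgt: "\<And>j n. n \<in> F j \<Longrightarrow> n > j"
  shows "nowhere_dense_in (subtopology euclideanreal {0<..1}) (Bs F b k z r m)"
proof (rule nowhere_dense_I)
  show "Bs F b k z r m \<subseteq> topspace (subtopology euclideanreal {0<..1})" by (auto simp: Bs_def)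
next
  fix V assume V: "openin (subtopology euclideanreal {0<..1}) V" "V \<noteq> {}"
  obtain T where T0: "open T" "V = {0<..1} \<inter> T" using V(1) unfolding openin_open by blast
  have T: "open T" "V = T \<inter> {0<..1}" using T0 by auto
  obtain c where c: "c \<in> V" using V(2) by blast
  have c01: "0 < c" "c \<le> 1" using c T(2) by auto
  obtain \<rho> where \<rho>: "\<rho> > 0" "ball c \<rho> \<subseteq> T" using T(1) c T(2) open_contains_ball by blast
  have bp: "real b > 1" using b by simp
  obtain L where L: "(1 / real b) ^ L < \<rho>" using real_arch_pow_inv[OF \<rho>(1), of "1 / real b"] bp by auto
  define p where "p = length z"
  have pp: "p > 0" using z by (simp add: p_def)
  define j where "j = m + (2 * L + p) * (r + 1) + L"
  define M where "M = Max (insert 0 (F j)) + k + L"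
  define v where "v i = (if i \<le> L then digits b c i else z ! ((i - L - 1) mod p))" for i
  have vb: "v i < b" if "1 \<le> i" "i \<le> M" for i
  proof (cases "i \<le> L")
    case True then show ?thesis using digits_lt[OF b c01] by (simp add: v_def)
  next
    case False
    have "z ! ((i - L - 1) mod p) \<in> set z" using pp by (simp add: p_def)
    then show ?thesis using False z(2) by (auto simp: v_def)
  qed
  have vpre: "v i = digits b c i" if "1 \<le> i" "i \<le> L" for i using that by (simp add: v_def)
  define V' where "V' = {lo b v M <..< hi b v M}"
  have V'o: "open V'" by (simp add: V'_def)
  have lohi: "lo b v M < hi b v M"
  proof -
    have "1 / real b ^ M > 0" using bp by simp
    then show ?thesis using hi_lo[where b=b and v=v and M=M and i=M, OF b vb] by linarith
  qed
  have V'ne: "V' \<noteq> {}"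
  proof -
    have "(lo b v M + hi b v M) / 2 \<in> V'" using lohi by (simp add: V'_def)
    then show ?thesis by blast
  qed
  have V'01: "V' \<subseteq> {0<..1}"
  proof
    fix x assume "x \<in> V'"
    then have "lo b v M < x" "x < hi b v M" by (auto simp: V'_def)
    moreover have "0 \<le> lo b v M" by (rule lo_ge0[where b=b and v=v and M=M, OF b vb])
    moreover have "hi b v M \<le> 1" by (rule hi_le1[where M=M, OF b vb order_refl])
    ultimately show "x \<in> {0<..1}" by auto
  qed
  have LM: "L \<le> M" by (simp add: M_def)
  have cL: "lo b v L < c" "c \<le> hi b v L"
  proof -
    have K: "int (Kv b v L) = Kd b c L" by (rule Kv_prefix[OF b c01 vpre]) auto
    have "real_of_int (Kd b c L) < c * real b ^ L" "c * real b ^ L \<le> real_of_int (Kd b c L) + 1"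
      by (rule Kd_bounds)+
    then have "real (Kv b v L) < c * real b ^ L" "c * real b ^ L \<le> real (Kv b v L) + 1"
      using K by (metis of_int_of_nat_eq)+
    then show "lo b v L < c" "c \<le> hi b v L" using bp
      by (simp_all add: lo_def[where M=M, OF b vb] hi_def[where M=M, OF b vb] field_simps)
  qed
  have V'V: "V' \<subseteq> V"
  proof
    fix x assume x: "x \<in> V'"
    have x1: "lo b v M < x" "x < hi b v M" using x by (auto simp: V'_def)
    have "lo b v L \<le> lo b v M" by (rule lo_mono[where M=M, OF b vb LM])
    moreover have "hi b v M \<le> hi b v L" by (rule hi_mono[OF b vb LM order_refl])
    ultimately have "lo b v L < x" "x < hi b v L" using x1 by auto
    then have "dist c x < hi b v L - lo b v L" using cL by (simp add: dist_real_def abs_less_iff)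
    also have "\<dots> = (1 / real b) ^ L" by (simp add: hi_lo[where M=M, OF b vb] power_one_over)
    finally have "x \<in> ball c \<rho>" using L by simp
    then show "x \<in> V" using \<rho>(2) T(2) V'01 x by auto
  qed
  have V'open: "openin (subtopology euclideanreal {0<..1}) V'"
    unfolding openin_open using V'o V'01 by (intro exI[of _ V']) auto
  have V'dis: "V' \<inter> Bs F b k z r m = {}"
  proof -
    have "F j \<subseteq> Hs b k z r x" if x: "x \<in> V'" for x
    proof
      fix n assume n: "n \<in> F j"
      have x01: "0 < x" "x \<le> 1" using V'01 x by auto
      have dig: "digits b x i = v i" if "1 \<le> i" "i \<le> M" for i
        using x that by (intro cyl_digits[OF b vb]) (auto simp: V'_def)
      have nj: "n > j" by (rule Fgt[OF n])
      have nM: "n \<le> Max (insert 0 (F j))" using n Ffin by simp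
      have n1: "L \<le> n" "n + k \<le> M + 1" "n \<ge> 1" using nj nM by (auto simp: j_def M_def)
      have dz: "digits b x (L + 1 + t) = z ! (t mod length z)" if "L + 1 + t \<le> M" for t
        using dig[of "L + 1 + t"] that by (simp add: v_def p_def)
      have "(2 * L + p) * (r + 1) \<le> j" unfolding j_def by (rule le_trans[OF le_add2 le_add1])
      then have "(2 * L + p) * (r + 1) < n" using nj by linarith
      then have big: "real ((2 * L + p) * (r + 1)) < real n" by (simp only: of_nat_less_iff)
      have "\<bar>freq b s n x - cnt z k s / real (length z)\<bar> < 1 / (real r + 1)" if s: "s \<in> strings b k" for s
      proof -
        have "\<bar>freq b s n x - cnt z k s / real (length z)\<bar> \<le> (2 * real L + real p) / real n"
          using freq_periodic[OF b x01 z(1) dz n1] s by (simp add: strings_def p_def)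
        also have "\<dots> < 1 / (real r + 1)"
        proof -
          have "(2 * real L + real p) * (real r + 1) = real ((2 * L + p) * (r + 1))" by (simp add: algebra_simps)
          then have "(2 * real L + real p) * (real r + 1) < real n" using big by linarith
          then show ?thesis using n1(3) by (simp add: field_simps)
        qed
        finally show ?thesis .
      qed
      then show "n \<in> Hs b k z r x" using n1(3) by (simp add: Hs_def)
    qed
    moreover have "j \<ge> m" by (simp add: j_def)
    ultimately show ?thesis unfolding Bs_def by blast
  qed
  show "\<exists>V'. openin (subtopology euclideanreal {0<..1}) V' \<and> V' \<noteq> {} \<and> V' \<subseteq> V \<and> V' \<inter> Bs F b k z r m = {}"
    using V'open V'ne V'V V'dis by blast
qed

lemma nowhere_dense_meager: "nowhere_dense_in X N \<Longrightarrow> meager_in X N"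
  unfolding meager_in_def by (intro exI[of _ "{N}"]) auto

theorem theorem2p1:
  fixes I :: "nat set set"
  assumes "is_ideal I" and "meager_ideal I"
  shows "comeager_in (subtopology euclideanreal {0<..1})
           {x \<in> {0<..1}. \<forall>b k. b \<ge> 2 \<and> k \<ge> 1 \<longrightarrow> Gamma b k x I = Delta b k}"
proof -
  have I: "is_ideal I" by (rule assms(1))
  obtain F where F: "\<forall>j. finite (F j)" "\<forall>j. \<forall>n\<in>F j. n > j" "\<forall>A\<in>I. \<exists>m. \<forall>j\<ge>m. \<not> F j \<subseteq> A"
    using meager_ideal_blocks[OF assms] by blast
  define X where "X = subtopology euclideanreal {0<..1}"
  define G where "G = {x \<in> {0<..1}. \<forall>b k. b \<ge> 2 \<and> k \<ge> 1 \<longrightarrow> Gamma b k x I = Delta b k}"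
  define Idx :: "(nat \<times> nat \<times> nat list \<times> nat) set"
    where "Idx = {(b, k, z, r). b \<ge> 2 \<and> k \<ge> 1 \<and> z \<noteq> [] \<and> set z \<subseteq> {..<b}}"
  define BB where "BB i = (case i of (b, k, z, r) \<Rightarrow> (\<Union>m. Bs F b k z r m))" for i :: "nat \<times> nat \<times> nat list \<times> nat"
  have cIdx: "countable Idx" by (rule countable_subset[OF subset_UNIV]) simp
  have mB: "meager_in X (BB i)" if i: "i \<in> Idx" for i
  proof -
    obtain b k z r where e: "i = (b, k, z, r)" by (cases i) auto
    have p: "b \<ge> 2" "k \<ge> 1" "z \<noteq> []" "set z \<subseteq> {..<b}" using i by (auto simp: Idx_def e)
    have "meager_in X (\<Union>m\<in>UNIV. Bs F b k z r m)"
    proof (rule meager_in_UN)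
      fix m :: nat
      show "meager_in X (Bs F b k z r m)" unfolding X_def
        by (rule nowhere_dense_meager, rule Bs_nowhere_dense[OF p]) (use F in auto)
    qed simp
    then show ?thesis by (simp add: BB_def e)
  qed
  have cover: "topspace X - G \<subseteq> (\<Union>i\<in>Idx. BB i)"
  proof
    fix x assume "x \<in> topspace X - G"
    then have x: "0 < x" "x \<le> 1" and nG: "x \<notin> G" by (auto simp: X_def)
    then obtain b k where bk: "b \<ge> 2" "k \<ge> 1" "Gamma b k x I \<noteq> Delta b k" by (auto simp: G_def)
    have "Gamma b k x I \<subseteq> Delta b k" by (rule Gamma_sub_Delta[OF bk(1,2) x I])
    then obtain \<eta> where \<eta>: "\<eta> \<in> Delta b k" "\<eta> \<notin> Gamma b k x I" using bk(3) by blast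
    then obtain U where U: "open U" "\<eta> \<in> U" "{n. n \<ge> 1 \<and> freq_vec b k n x \<in> U} \<in> I"
      unfolding Gamma_def by blast
    obtain D \<delta> where D: "finite D" "\<delta> > 0" "\<And>p. (\<forall>s\<in>D. \<bar>p s - \<eta> s\<bar> < \<delta>) \<Longrightarrow> p \<in> U"
      using open_fun_box[OF U(1,2)] by blast
    have d2: "\<delta> / 2 > 0" using D(2) by simp
    obtain z where z: "z \<noteq> []" "set z \<subseteq> {..<b}"
        "\<forall>s\<in>strings b k. \<bar>cnt z k s / real (length z) - \<eta> s\<bar> < \<delta> / 2"
      using Delta_approx[OF bk(2) \<eta>(1) d2] by blast
    obtain r where r: "inverse (real (Suc r)) < \<delta> / 2" using reals_Archimedean[OF d2] by blast
    have r': "1 / (real r + 1) < \<delta> / 2" using r by (simp add: inverse_eq_divide add.commute)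
    have off: "\<eta> s = 0" if "s \<notin> strings b k" for s using \<eta>(1) that by (simp add: Delta_def)
    have "Hs b k z r x \<subseteq> {n. n \<ge> 1 \<and> freq_vec b k n x \<in> U}"
    proof
      fix n assume n: "n \<in> Hs b k z r x"
      have "freq_vec b k n x \<in> U"
      proof (rule D(3), intro ballI)
        fix s assume "s \<in> D"
        show "\<bar>freq_vec b k n x s - \<eta> s\<bar> < \<delta>"
        proof (cases "s \<in> strings b k")
          case True
          have a: "\<bar>freq b s n x - cnt z k s / real (length z)\<bar> < 1 / (real r + 1)"
            using n True by (simp add: Hs_def)
          have c: "\<bar>cnt z k s / real (length z) - \<eta> s\<bar> < \<delta> / 2" using z(3) True by blast
          show ?thesis using a c r' True unfolding freq_vec_def abs_less_iff by auto
        next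
          case False
          then show ?thesis using off[OF False] D(2) by (simp add: freq_vec_def)
        qed
      qed
      then show "n \<in> {n. n \<ge> 1 \<and> freq_vec b k n x \<in> U}" using n by (simp add: Hs_def)
    qed
    then have "Hs b k z r x \<in> I" using U(3) I unfolding is_ideal_def by blast
    then obtain m where m: "\<forall>j\<ge>m. \<not> F j \<subseteq> Hs b k z r x" using F(3) by blast
    have "x \<in> Bs F b k z r m" using m x by (simp add: Bs_def)
    then have "x \<in> BB (b, k, z, r)" by (auto simp: BB_def)
    moreover have "(b, k, z, r) \<in> Idx" using bk z by (simp add: Idx_def)
    ultimately show "x \<in> (\<Union>i\<in>Idx. BB i)" by blast
  qed
  have "meager_in X (\<Union>i\<in>Idx. BB i)" by (rule meager_in_UN[OF cIdx mB])
  then have "meager_in X (topspace X - G)" using cover by (rule meager_in_subset)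
  then show ?thesis by (simp add: comeager_in_def X_def G_def)
qed

end
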